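(* Assume that $A_{m,m_1;m'}=\gamma_m\gamma_{m_1}$ for all $m,m_1\ge1$ and $m'\in\{1,\dots,m+m_1-1\}$, where $(\gamma_m)_{m\ge1}$ is a sequence with $\gamma_m\in(0,\infty)$. Then for every sequence $f=(f_m)_{m\ge1}$ of positive functions (with sufficient smoothness and decay for all expressions to make sense), $$\sum_{m\ge1}\int_{\mathbb{R}^n}Q_m(f)\,\log\Big(\frac{\gamma_m f_m}{m^{n/2}}\Big)\,dv\le0.$$
   Context: Let $n\ge1$. Given masses $m,m_1\ge1$, $m'\in\{1,\dots,m+m_1-1\}$, $m'_1:=m+m_1-m'$, $v,v_1\in\mathbb{R}^n$, $\Omega\in\mathbb{S}^{n-1}$ with $\Omega\cdot(v-v_1)\le0$, the collision rule is $v'=\frac{mv+m_1v_1}{m+m_1}+\frac{(mm_1)^{1/2}}{m+m_1}\big(\frac{m'_1}{m'}\big)^{1/2}\big[v-v_1-2((v-v_1)\cdot\Omega)\Omega\big]$, $v'_1=\frac{mv+m_1v_1}{m+m_1}-\frac{(mm_1)^{1/2}}{m+m_1}\big(\frac{m'}{m'_1}\big)^{1/2}\big[v-v_1-2((v-v_1)\cdot\Omega)\Omega\big]$. Let $\mathbf B\ge0$ on $[0,\infty)\times[-1,1]$ and $B_{m,m_1}(v,v_1,\Omega):=\mathbf B\big(\frac{mm_1}{m+m_1}|v-v_1|^2,\Omega\cdot\frac{v-v_1}{|v-v_1|}\big)$. The BME operator $Q(f)=(Q_m(f))_{m\ge1}$ with rates $A_{m,m_1;m'}\ge0$ is defined by: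 for every test sequence $\varphi$, $$\sum_{m\ge1}\int Q_m(f)\varphi_m\,dv=\frac12\sum_{m,m_1\ge1}\sum_{m'=1}^{m+m_1-1}A_{m,m_1;m'}\int_{\{(v-v_1)\cdot\Omega\le0\}}B_{m,m_1}(v,v_1,\Omega)\big(\varphi_{m'}(v')+\varphi_{m'_1}(v'_1)-\varphi_m(v)-\varphi_{m_1}(v_1)\big)f_m(v)f_{m_1}(v_1)\,dv\,dv_1\,d\Omega.$$ *)

theory Defs
  imports "HOL-Analysis.Analysis"
begin

text \<open>Velocities live in an abstract Euclidean space 'a (i.e. R^n with n = DIM('a)).\<close>

text \<open>Surface measure on the unit sphere S^{n-1}, defined as the cone measure:
  sigma(E) = n * Lebesgue measure of {t w. w in E, 0 < t <= 1}.\<close>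
definition sphere_measure :: "'a::euclidean_space measure" where
  "sphere_measure = scale_measure (of_nat DIM('a))
     (distr (restrict_space lborel (ball 0 1)) borel (\<lambda>x. x /\<^sub>R norm x))"

text \<open>Post-collisional velocities v' and v'_1 (the outgoing masses are m' and
  m'_1 = m + m_1 - m').\<close>
definition post_v :: "nat \<Rightarrow> nat \<Rightarrow> nat \<Rightarrow> 'a::euclidean_space \<Rightarrow> 'a \<Rightarrow> 'a \<Rightarrow> 'a" where
  "post_v m m1 m' v v1 \<Omega> =
     (1 / real (m + m1)) *\<^sub>R (real m *\<^sub>R v + real m1 *\<^sub>R v1)
     + (sqrt (real m * real m1) / real (m + m1) * sqrt (real (m + m1 - m') / real m'))
       *\<^sub>R (v - v1 - (2 * ((v - v1) \<bullet> \<Omega>)) *\<^sub>R \<Omega>)"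

definition post_v1 :: "nat \<Rightarrow> nat \<Rightarrow> nat \<Rightarrow> 'a::euclidean_space \<Rightarrow> 'a \<Rightarrow> 'a \<Rightarrow> 'a" where
  "post_v1 m m1 m' v v1 \<Omega> =
     (1 / real (m + m1)) *\<^sub>R (real m *\<^sub>R v + real m1 *\<^sub>R v1)
     - (sqrt (real m * real m1) / real (m + m1) * sqrt (real m' / real (m + m1 - m')))
       *\<^sub>R (v - v1 - (2 * ((v - v1) \<bullet> \<Omega>)) *\<^sub>R \<Omega>)"

definition coll_kernel ::
  "(real \<Rightarrow> real \<Rightarrow> real) \<Rightarrow> nat \<Rightarrow> nat \<Rightarrow> 'a::euclidean_space \<Rightarrow> 'a \<Rightarrow> 'a \<Rightarrow> real" where
  "coll_kernel BB m m1 v v1 \<Omega> =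
     BB (real m * real m1 / real (m + m1) * (norm (v - v1))\<^sup>2)
        (\<Omega> \<bullet> ((v - v1) /\<^sub>R norm (v - v1)))"

definition coll_space :: "(('a::euclidean_space \<times> 'a) \<times> 'a) measure" where
  "coll_space = (lborel \<Otimes>\<^sub>M lborel) \<Otimes>\<^sub>M sphere_measure"

definition coll_indices :: "(nat \<times> nat \<times> nat) set" where
  "coll_indices = {(m, m1, m'). 1 \<le> m \<and> 1 \<le> m1 \<and> 1 \<le> m' \<and> m' \<le> m + m1 - 1}"

definition coll_weight ::
  "(real \<Rightarrow> real \<Rightarrow> real) \<Rightarrow> (nat \<Rightarrow> 'a::euclidean_space \<Rightarrow> real) \<Rightarrow> nat \<Rightarrow> nat
     \<Rightarrow> ('a \<times> 'a) \<times> 'a \<Rightarrow> real" where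
  "coll_weight BB f m m1 x =
     (case x of ((v, v1), \<Omega>) \<Rightarrow>
        (if (v - v1) \<bullet> \<Omega> \<le> 0 then 1 else 0) * coll_kernel BB m m1 v v1 \<Omega> * f m v * f m1 v1)"

definition coll_term ::
  "nat \<Rightarrow> (real \<Rightarrow> real \<Rightarrow> real) \<Rightarrow> (nat \<Rightarrow> 'a::euclidean_space \<Rightarrow> real) \<Rightarrow> (nat \<Rightarrow> 'a \<Rightarrow> real)
     \<Rightarrow> nat \<times> nat \<times> nat \<Rightarrow> ('a \<times> 'a) \<times> 'a \<Rightarrow> real" where
  "coll_term i BB f \<phi> k x =
     (case k of (m, m1, m') \<Rightarrow> case x of ((v, v1), \<Omega>) \<Rightarrow>
        coll_weight BB f m m1 x *
        (if i = 0 then \<phi> m' (post_v m m1 m' v v1 \<Omega>)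
         else if i = 1 then \<phi> (m + m1 - m') (post_v1 m m1 m' v v1 \<Omega>)
         else if i = 2 then \<phi> m v
         else \<phi> m1 v1))"

definition coll_integrand ::
  "(real \<Rightarrow> real \<Rightarrow> real) \<Rightarrow> (nat \<Rightarrow> 'a::euclidean_space \<Rightarrow> real) \<Rightarrow> (nat \<Rightarrow> 'a \<Rightarrow> real)
     \<Rightarrow> nat \<times> nat \<times> nat \<Rightarrow> ('a \<times> 'a) \<times> 'a \<Rightarrow> real" where
  "coll_integrand BB f \<phi> k x =
     coll_term 0 BB f \<phi> k x + coll_term 1 BB f \<phi> k x - coll_term 2 BB f \<phi> k x - coll_term 3 BB f \<phi> k x"

text \<open>The pairing  sum_m int Q_m(f) phi_m dv,  which by definition of the BME operator
  (weak form) equals the right-hand side below.\<close>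
definition BME_pairing ::
  "(nat \<Rightarrow> nat \<Rightarrow> nat \<Rightarrow> real) \<Rightarrow> (real \<Rightarrow> real \<Rightarrow> real) \<Rightarrow> (nat \<Rightarrow> 'a::euclidean_space \<Rightarrow> real)
     \<Rightarrow> (nat \<Rightarrow> 'a \<Rightarrow> real) \<Rightarrow> real" where
  "BME_pairing A BB f \<phi> =
     1 / 2 * (\<Sum>\<^sub>\<infinity>k\<in>coll_indices.
        (case k of (m, m1, m') \<Rightarrow> A m m1 m') * integral\<^sup>L coll_space (coll_integrand BB f \<phi> k))"

definition entropy_test :: "(nat \<Rightarrow> real) \<Rightarrow> (nat \<Rightarrow> 'a::euclidean_space \<Rightarrow> real) \<Rightarrow> nat \<Rightarrow> 'a \<Rightarrow> real" where
  "entropy_test \<gamma> f m v = ln (\<gamma> m * f m v / real m powr (real DIM('a) / 2))"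

end

theory Submission
  imports Defs
begin

typedef (overloaded) ('a::euclidean_space) bidx = "Basis :: 'a set"
  using nonempty_Basis by blast

instance bidx :: (euclidean_space) finite
proof
  have "(UNIV :: 'a bidx set) = Abs_bidx ` Basis"
    using type_definition.Abs_image[OF type_definition_bidx] by metis
  then show "finite (UNIV :: 'a bidx set)" by (metis finite_Basis finite_imageI)
qed

definition bidx_nat :: "'a::euclidean_space bidx \<Rightarrow> nat" where
  "bidx_nat x = to_nat_on (Basis :: 'a set) (Rep_bidx x)"

lemma inj_bidx_nat: "inj bidx_nat"
proof (rule injI)
  fix x y :: "'a bidx" assume "bidx_nat x = bidx_nat y"
  then have "Rep_bidx x = Rep_bidx y"
    unfolding bidx_nat_def using inj_on_to_nat_on[of "Basis :: 'a set"] Rep_bidx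
    by (metis countable_finite finite_Basis inj_on_def)
  then show "x = y" by (simp add: Rep_bidx_inject)
qed

instantiation bidx :: (euclidean_space) linorder
begin
definition less_eq_bidx :: "'a bidx \<Rightarrow> 'a bidx \<Rightarrow> bool" where "less_eq_bidx x y = (bidx_nat x \<le> bidx_nat y)"
definition less_bidx :: "'a bidx \<Rightarrow> 'a bidx \<Rightarrow> bool" where "less_bidx x y = (bidx_nat x < bidx_nat y)"
instance proof
qed (use inj_bidx_nat in \<open>auto simp: less_eq_bidx_def less_bidx_def inj_eq dest: injD\<close>)
end

instance bidx :: (euclidean_space) wellorder
proof
  fix P :: "'a bidx \<Rightarrow> bool" and a
  assume step: "\<And>x. (\<And>y. y < x \<Longrightarrow> P y) \<Longrightarrow> P x"
  have "\<forall>x. bidx_nat x = n \<longrightarrow> P x" for n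
  proof (induction n rule: less_induct)
    case (less n)
    then show ?case using step by (auto simp: less_bidx_def)
  qed
  then show "P a" by blast
qed


lemma bij_Rep_bidx: "bij_betw Rep_bidx (UNIV :: 'a::euclidean_space bidx set) Basis"
  unfolding bij_betw_def
  using type_definition.Rep_range[OF type_definition_bidx] Rep_bidx_inject
  by (auto simp: inj_on_def)

lemma Basis_eq_range_Rep: "(Basis :: 'a::euclidean_space set) = range (Rep_bidx :: 'a bidx \<Rightarrow> 'a)"
  by (metis type_definition.Rep_range[OF type_definition_bidx])

lemma sum_Basis_bidx:
  "(\<Sum>b\<in>(Basis :: 'a::euclidean_space set). g b) = (\<Sum>i\<in>(UNIV :: 'a bidx set). g (Rep_bidx i))"
  using sum.reindex_bij_betw[OF bij_Rep_bidx, of g] by simp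

lemma prod_Basis_bidx:
  "(\<Prod>b\<in>(Basis :: 'a::euclidean_space set). g b) = (\<Prod>i\<in>(UNIV :: 'a bidx set). g (Rep_bidx i))"
  using prod.reindex_bij_betw[OF bij_Rep_bidx, of g] by simp

lemma inner_Rep_bidx: "Rep_bidx i \<bullet> Rep_bidx j = (if i = j then 1 else 0)"
  using Rep_bidx[of i] Rep_bidx[of j] Rep_bidx_inject[of i j] by (auto simp: inner_Basis)

definition to_cart :: "'a::euclidean_space \<Rightarrow> real^('a bidx)" where
  "to_cart x = (\<chi> i. x \<bullet> Rep_bidx i)"

definition from_cart :: "real^('a bidx) \<Rightarrow> 'a::euclidean_space" where
  "from_cart y = (\<Sum>i\<in>UNIV. (y $ i) *\<^sub>R Rep_bidx i)"

lemma from_to_cart [simp]: "from_cart (to_cart x) = x"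
proof -
  have "from_cart (to_cart x) = (\<Sum>b\<in>Basis. (x \<bullet> b) *\<^sub>R b)"
    unfolding from_cart_def to_cart_def sum_Basis_bidx by simp
  then show ?thesis by (simp add: euclidean_representation)
qed

lemma inner_from_cart_Rep: "from_cart y \<bullet> Rep_bidx j = y $ j"
proof -
  have "from_cart y \<bullet> Rep_bidx j = (\<Sum>i\<in>UNIV. y $ i * (Rep_bidx i \<bullet> Rep_bidx j))"
    unfolding from_cart_def by (simp add: inner_sum_left)
  also have "\<dots> = (\<Sum>i\<in>UNIV. if i = j then y $ i else 0)"
    by (intro sum.cong) (auto simp: inner_Rep_bidx)
  also have "\<dots> = y $ j" by simp
  finally show ?thesis .
qed

lemma to_from_cart [simp]: "to_cart (from_cart y) = y"
  by (simp add: to_cart_def vec_eq_iff inner_from_cart_Rep)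

lemma inner_to_cart: "to_cart x \<bullet> to_cart y = x \<bullet> y"
proof -
  have "to_cart x \<bullet> to_cart y = (\<Sum>i\<in>UNIV. (x \<bullet> Rep_bidx i) * (y \<bullet> Rep_bidx i))"
    by (simp add: to_cart_def inner_vec_def)
  also have "\<dots> = (\<Sum>b\<in>Basis. (x \<bullet> b) * (y \<bullet> b))"
    by (simp add: sum_Basis_bidx)
  also have "\<dots> = x \<bullet> y" by (rule euclidean_inner[symmetric])
  finally show ?thesis .
qed

lemma linear_to_cart: "linear to_cart"
  by (rule linearI) (simp_all add: to_cart_def vec_eq_iff inner_add_left)

lemma linear_from_cart: "linear from_cart"
  by (rule linearI) (simp_all add: from_cart_def scaleR_add_left sum.distrib scaleR_sum_right)

lemma to_cart_meas [measurable]: "to_cart \<in> borel_measurable borel"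
  by (intro borel_measurable_continuous_onI linear_continuous_on linear_conv_bounded_linear[THEN iffD1] linear_to_cart)

lemma from_cart_meas [measurable]: "from_cart \<in> borel_measurable borel"
  by (intro borel_measurable_continuous_onI linear_continuous_on linear_conv_bounded_linear[THEN iffD1] linear_from_cart)

lemma distr_to_cart: "distr lborel borel (to_cart :: 'a::euclidean_space \<Rightarrow> _) = lborel"
proof (rule lborel_eqI[symmetric])
  fix l u :: "real^('a bidx)"
  assume le: "\<And>b. b \<in> Basis \<Longrightarrow> l \<bullet> b \<le> u \<bullet> b"
  have le': "l $ i \<le> u $ i" for i
    using le[of "axis i 1"] by (simp add: inner_axis)
  have pre: "to_cart -` box l u = box (from_cart l) (from_cart u :: 'a)"
  proof -
    have "x \<in> to_cart -` box l u \<longleftrightarrow> x \<in> box (from_cart l) (from_cart u)" for x :: 'a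
    proof -
      have "x \<in> box (from_cart l) (from_cart u) \<longleftrightarrow>
            (\<forall>i. from_cart l \<bullet> Rep_bidx i < x \<bullet> Rep_bidx i \<and> x \<bullet> Rep_bidx i < from_cart u \<bullet> Rep_bidx i)"
        unfolding mem_box Basis_eq_range_Rep by simp
      then show ?thesis
        by (simp add: mem_box_cart to_cart_def inner_from_cart_Rep)
    qed
    then show ?thesis by blast
  qed
  have "emeasure (distr lborel borel (to_cart :: 'a \<Rightarrow> _)) (box l u) = emeasure lborel (box (from_cart l) (from_cart u :: 'a))"
    by (simp add: emeasure_distr pre)
  also have "\<dots> = (\<Prod>b\<in>Basis. (from_cart u - from_cart l :: 'a) \<bullet> b)"
  proof (rule emeasure_lborel_box)
    fix b :: 'a assume "b \<in> Basis"
    then obtain i where "b = Rep_bidx i" unfolding Basis_eq_range_Rep by blast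
    then show "from_cart l \<bullet> b \<le> from_cart u \<bullet> b" by (simp add: inner_from_cart_Rep le')
  qed
  also have "\<dots> = (\<Prod>i\<in>UNIV. u $ i - l $ i)"
    by (simp add: prod_Basis_bidx inner_diff_left inner_from_cart_Rep)
  also have "\<dots> = (\<Prod>b\<in>Basis. (u - l) \<bullet> b)"
  proof -
    have Bas: "(Basis :: (real^('a bidx)) set) = (\<lambda>i. axis i 1) ` UNIV"
      by (auto simp: Basis_vec_def)
    have inj: "inj (\<lambda>i::'a bidx. axis i (1::real))"
      by (auto simp: inj_on_def axis_eq_axis)
    have "(\<Prod>b\<in>Basis. (u - l) \<bullet> b) = (\<Prod>b\<in>(\<lambda>i. axis i 1) ` (UNIV::'a bidx set). (u - l) \<bullet> b)"
      by (subst Bas) (rule refl)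
    also have "\<dots> = (\<Prod>i\<in>UNIV. (u - l) \<bullet> axis i (1::real))"
      using prod.reindex[OF inj, of "\<lambda>b. (u - l) \<bullet> b"] by (simp add: o_def)
    finally have "(\<Prod>b\<in>Basis. (u - l) \<bullet> b) = (\<Prod>i\<in>UNIV. (u - l) \<bullet> axis i (1::real))" .
    then show ?thesis by (simp add: inner_axis)
  qed
  finally show "emeasure (distr lborel borel (to_cart :: 'a \<Rightarrow> _)) (box l u) = (\<Prod>b\<in>Basis. (u - l) \<bullet> b)" .
qed simp

lemma distr_orth_cart:
  fixes g :: "real^'n::{finite,wellorder} \<Rightarrow> real^'n::_"
  assumes g: "orthogonal_transformation g"
  shows "distr lborel borel g = lborel"
proof (rule lborel_eqI[symmetric])
  have lin: "linear g" using g by (rule orthogonal_transformation_linear)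
  have gm [measurable]: "g \<in> borel_measurable borel"
    by (intro borel_measurable_continuous_onI linear_continuous_on linear_conv_bounded_linear[THEN iffD1] lin)
  fix l u :: "(real, 'n::{finite,wellorder}) vec"
  assume le: "\<And>b. b \<in> Basis \<Longrightarrow> l \<bullet> b \<le> u \<bullet> b"
  let ?S = "box l u"
  have gi: "orthogonal_transformation (inv g)" using g by (rule orthogonal_transformation_inv)
  have pre: "g -` ?S = inv g ` ?S"
    using orthogonal_transformation_bij[OF g] by (rule bij_vimage_eq_inv_image)
  have sb: "g -` ?S \<in> sets borel" using measurable_sets[OF gm, of ?S] by simp
  have lm: "inv g ` ?S \<in> lmeasurable" using gi by (rule measurable_orthogonal_image) simp
  have "emeasure (distr lborel borel g) ?S = emeasure lborel (g -` ?S)"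
    by (simp add: emeasure_distr)
  also have "\<dots> = emeasure lebesgue (g -` ?S)"
    using sb by simp
  also have "\<dots> = ennreal (measure lebesgue (inv g ` ?S))"
    using lm pre by (simp add: emeasure_eq_measure2)
  also have "\<dots> = ennreal (measure lebesgue ?S)"
    using gi by (simp add: measure_orthogonal_image)
  also have "\<dots> = emeasure lebesgue ?S"
    by (simp add: emeasure_eq_measure2)
  also have "\<dots> = emeasure lborel ?S" by simp
  also have "\<dots> = (\<Prod>b\<in>Basis. (u - l) \<bullet> b)" using le by simp
  finally show "emeasure (distr lborel borel g) ?S = (\<Prod>b\<in>Basis. (u - l) \<bullet> b)" .
qed simp

lemma distr_orth:
  fixes g :: "'a::euclidean_space \<Rightarrow> 'a"
  assumes g: "orthogonal_transformation g"
  shows "distr lborel borel g = lborel"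
proof -
  define gt where "gt = to_cart \<circ> g \<circ> (from_cart :: real^('a bidx) \<Rightarrow> 'a)"
  have lin: "linear g" using g by (rule orthogonal_transformation_linear)
  have gm [measurable]: "g \<in> borel_measurable borel"
    by (intro borel_measurable_continuous_onI linear_continuous_on linear_conv_bounded_linear[THEN iffD1] lin)
  have "orthogonal_transformation gt"
    unfolding orthogonal_transformation_def
  proof
    show "linear gt" unfolding gt_def
      by (intro linear_compose linear_to_cart linear_from_cart lin)
    show "\<forall>v w. gt v \<bullet> gt w = v \<bullet> w"
    proof (intro allI)
      fix v w :: "real^('a bidx)"
      have "gt v \<bullet> gt w = g (from_cart v) \<bullet> g (from_cart w)"
        by (simp add: gt_def inner_to_cart)
      also have "\<dots> = from_cart v \<bullet> from_cart w"
        using g by (simp add: orthogonal_transformation_def)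
      also have "\<dots> = to_cart (from_cart v) \<bullet> to_cart (from_cart w :: 'a)"
        by (rule inner_to_cart[symmetric])
      finally show "gt v \<bullet> gt w = v \<bullet> w" by simp
    qed
  qed
  then have dgt: "distr lborel borel gt = lborel" by (rule distr_orth_cart)
  have gtm [measurable]: "gt \<in> borel_measurable borel" unfolding gt_def by measurable
  have dfc: "distr lborel borel (from_cart :: real^('a bidx) \<Rightarrow> 'a) = lborel"
  proof -
    have "distr lborel borel (from_cart :: real^('a bidx) \<Rightarrow> 'a)
        = distr (distr lborel borel (to_cart :: 'a \<Rightarrow> _)) borel from_cart"
      by (simp add: distr_to_cart)
    also have "\<dots> = distr lborel borel (from_cart \<circ> (to_cart :: 'a \<Rightarrow> _))"
      by (subst distr_distr) auto
    also have "\<dots> = distr lborel borel (\<lambda>x. x)"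
      by (simp add: o_def)
    also have "\<dots> = lborel" by (rule distr_id2) simp
    finally show ?thesis .
  qed
  have geq: "g = from_cart \<circ> gt \<circ> to_cart"
    by (simp add: gt_def fun_eq_iff)
  have "distr lborel borel g = distr lborel borel ((from_cart \<circ> gt) \<circ> to_cart)"
    using geq by (simp add: o_assoc)
  also have "\<dots> = distr (distr lborel borel to_cart) borel (from_cart \<circ> gt)"
    by (subst distr_distr) auto
  also have "\<dots> = distr lborel borel (from_cart \<circ> gt)"
    by (simp add: distr_to_cart)
  also have "\<dots> = distr (distr lborel borel gt) borel from_cart"
    by (subst distr_distr) auto
  also have "\<dots> = lborel" by (simp add: dgt dfc)
  finally show ?thesis .
qed

lemma nn_integral_orth:
  fixes g :: "'a::euclidean_space \<Rightarrow> 'a" and h :: "'a \<Rightarrow> ennreal"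
  assumes g: "orthogonal_transformation g" and h [measurable]: "h \<in> borel_measurable borel"
  shows "(\<integral>\<^sup>+x. h (g x) \<partial>lborel) = (\<integral>\<^sup>+x. h x \<partial>lborel)"
proof -
  have lin: "linear g" using g by (rule orthogonal_transformation_linear)
  have gm [measurable]: "g \<in> borel_measurable borel"
    by (intro borel_measurable_continuous_onI linear_continuous_on linear_conv_bounded_linear[THEN iffD1] lin)
  have "(\<integral>\<^sup>+x. h x \<partial>lborel) = (\<integral>\<^sup>+x. h x \<partial>distr lborel borel g)"
    by (simp add: distr_orth[OF g])
  also have "\<dots> = (\<integral>\<^sup>+x. h (g x) \<partial>lborel)"
    by (subst nn_integral_distr) auto
  finally show ?thesis by simp
qed

definition refl_map :: "'a::euclidean_space \<Rightarrow> 'a \<Rightarrow> 'a" where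
  "refl_map \<Omega> x = x - (2 * (x \<bullet> \<Omega>)) *\<^sub>R \<Omega>"

lemma orth_refl_map:
  assumes "norm \<Omega> = 1"
  shows "orthogonal_transformation (refl_map \<Omega>)"
  unfolding orthogonal_transformation_def
proof
  show "linear (refl_map \<Omega>)"
    by (rule linearI) (simp_all add: refl_map_def inner_add_left algebra_simps)
  have "\<Omega> \<bullet> \<Omega> = 1" using assms by (simp add: dot_square_norm)
  then show "\<forall>v w. refl_map \<Omega> v \<bullet> refl_map \<Omega> w = v \<bullet> w"
    by (simp add: refl_map_def inner_diff_left inner_diff_right algebra_simps inner_commute)
qed

definition nnscale :: "('b::euclidean_space \<Rightarrow> 'b) \<Rightarrow> ennreal \<Rightarrow> bool" where
  "nnscale \<Phi> c \<longleftrightarrow> \<Phi> \<in> borel_measurable borel \<and>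
     (\<forall>h::'b \<Rightarrow> ennreal. h \<in> borel_measurable borel \<longrightarrow>
        (\<integral>\<^sup>+x. h (\<Phi> x) \<partial>lborel) = c * (\<integral>\<^sup>+x. h x \<partial>lborel))"

lemma nnscale_comp:
  assumes "nnscale \<Phi> a" "nnscale \<Psi> b"
  shows "nnscale (\<Psi> \<circ> \<Phi>) (a * b)"
  unfolding nnscale_def
proof (intro conjI allI impI)
  have [measurable]: "\<Phi> \<in> borel_measurable borel" "\<Psi> \<in> borel_measurable borel"
    using assms by (auto simp: nnscale_def)
  show "\<Psi> \<circ> \<Phi> \<in> borel_measurable borel" by measurable
  fix h :: "'a \<Rightarrow> ennreal" assume [measurable]: "h \<in> borel_measurable borel"
  have "(\<integral>\<^sup>+x. h ((\<Psi> \<circ> \<Phi>) x) \<partial>lborel) = (\<integral>\<^sup>+x. (h \<circ> \<Psi>) (\<Phi> x) \<partial>lborel)" by simp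
  also have "\<dots> = a * (\<integral>\<^sup>+x. (h \<circ> \<Psi>) x \<partial>lborel)"
    using assms(1) unfolding nnscale_def by (metis measurable_comp \<open>\<Psi> \<in> borel_measurable borel\<close> \<open>h \<in> borel_measurable borel\<close>)
  also have "\<dots> = a * (b * (\<integral>\<^sup>+x. h x \<partial>lborel))"
    using assms(2) unfolding nnscale_def by (simp add: \<open>h \<in> borel_measurable borel\<close>)
  finally show "(\<integral>\<^sup>+x. h ((\<Psi> \<circ> \<Phi>) x) \<partial>lborel) = a * b * (\<integral>\<^sup>+x. h x \<partial>lborel)"
    by (simp add: mult.assoc)
qed

lemma meas_pair_lborel: "(h \<in> borel_measurable (lborel \<Otimes>\<^sub>M lborel)) = (h \<in> borel_measurable (borel :: ('a::euclidean_space \<times> 'b::euclidean_space) measure))"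
  by (simp add: lborel_prod)

lemma nnscale_fst:
  fixes \<phi> :: "'a::euclidean_space \<Rightarrow> 'a \<Rightarrow> 'a"
  assumes meas: "(\<lambda>z. (\<phi> (snd z) (fst z), snd z)) \<in> borel_measurable borel"
    and sc: "\<And>y g. g \<in> borel_measurable borel \<Longrightarrow> (\<integral>\<^sup>+x. g (\<phi> y x) \<partial>lborel) = a * (\<integral>\<^sup>+x. g x \<partial>lborel)"
  shows "nnscale (\<lambda>z. (\<phi> (snd z) (fst z), snd z)) a"
  unfolding nnscale_def
proof (intro conjI allI impI meas)
  fix h :: "'a \<times> 'a \<Rightarrow> ennreal" assume hm: "h \<in> borel_measurable borel"
  have hm': "h \<in> borel_measurable (lborel \<Otimes>\<^sub>M lborel)" using hm by (simp add: meas_pair_lborel)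
  have hc: "(\<lambda>z. h (\<phi> (snd z) (fst z), snd z)) \<in> borel_measurable (lborel \<Otimes>\<^sub>M lborel)"
    using measurable_comp[OF meas hm] by (simp add: meas_pair_lborel o_def)
  have inner: "(\<lambda>y. \<integral>\<^sup>+x. h (x, y) \<partial>lborel) \<in> borel_measurable lborel"
    using hm' by (intro lborel.borel_measurable_nn_integral) (simp add: measurable_pair_swap_iff[symmetric] split_beta')
  have "(\<integral>\<^sup>+z. h (\<phi> (snd z) (fst z), snd z) \<partial>lborel) = (\<integral>\<^sup>+z. h (\<phi> (snd z) (fst z), snd z) \<partial>(lborel \<Otimes>\<^sub>M lborel))"
    by (simp add: lborel_prod)
  also have "\<dots> = (\<integral>\<^sup>+y. \<integral>\<^sup>+x. h (\<phi> y x, y) \<partial>lborel \<partial>lborel)"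
    using lborel_pair.nn_integral_snd[OF hc] by simp
  also have "\<dots> = (\<integral>\<^sup>+y. a * \<integral>\<^sup>+x. h (x, y) \<partial>lborel \<partial>lborel)"
  proof (intro nn_integral_cong)
    fix y
    have "(\<lambda>x. h (x, y)) \<in> borel_measurable borel"
      using hm by measurable
    then show "(\<integral>\<^sup>+x. h (\<phi> y x, y) \<partial>lborel) = a * \<integral>\<^sup>+x. h (x, y) \<partial>lborel"
      using sc[of "\<lambda>x. h (x, y)" y] by simp
  qed
  also have "\<dots> = a * (\<integral>\<^sup>+y. \<integral>\<^sup>+x. h (x, y) \<partial>lborel \<partial>lborel)"
    using inner by (rule nn_integral_cmult)
  also have "\<dots> = a * (\<integral>\<^sup>+z. h z \<partial>(lborel \<Otimes>\<^sub>M lborel))"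
    using lborel_pair.nn_integral_snd[OF hm'] by simp
  also have "\<dots> = a * (\<integral>\<^sup>+z. h z \<partial>lborel)"
    by (simp add: lborel_prod)
  finally show "(\<integral>\<^sup>+z. h (\<phi> (snd z) (fst z), snd z) \<partial>lborel) = a * (\<integral>\<^sup>+z. h z \<partial>lborel)" .
qed

lemma nnscale_snd:
  fixes \<phi> :: "'a::euclidean_space \<Rightarrow> 'a \<Rightarrow> 'a"
  assumes meas: "(\<lambda>z. (fst z, \<phi> (fst z) (snd z))) \<in> borel_measurable borel"
    and sc: "\<And>y g. g \<in> borel_measurable borel \<Longrightarrow> (\<integral>\<^sup>+x. g (\<phi> y x) \<partial>lborel) = a * (\<integral>\<^sup>+x. g x \<partial>lborel)"
  shows "nnscale (\<lambda>z. (fst z, \<phi> (fst z) (snd z))) a"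
  unfolding nnscale_def
proof (intro conjI allI impI meas)
  fix h :: "'a \<times> 'a \<Rightarrow> ennreal" assume hm: "h \<in> borel_measurable borel"
  have hm': "h \<in> borel_measurable (lborel \<Otimes>\<^sub>M lborel)" using hm by (simp add: meas_pair_lborel)
  have hc: "(\<lambda>z. h (fst z, \<phi> (fst z) (snd z))) \<in> borel_measurable (lborel \<Otimes>\<^sub>M lborel)"
    using measurable_comp[OF meas hm] by (simp add: meas_pair_lborel o_def)
  have inner: "(\<lambda>x. \<integral>\<^sup>+y. h (x, y) \<partial>lborel) \<in> borel_measurable lborel"
    using hm' by (intro lborel.borel_measurable_nn_integral) simp
  have "(\<integral>\<^sup>+z. h (fst z, \<phi> (fst z) (snd z)) \<partial>lborel) = (\<integral>\<^sup>+z. h (fst z, \<phi> (fst z) (snd z)) \<partial>(lborel \<Otimes>\<^sub>M lborel))"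
    by (simp add: lborel_prod)
  also have "\<dots> = (\<integral>\<^sup>+x. \<integral>\<^sup>+y. h (x, \<phi> x y) \<partial>lborel \<partial>lborel)"
    using lborel.nn_integral_fst[OF hc] by simp
  also have "\<dots> = (\<integral>\<^sup>+x. a * \<integral>\<^sup>+y. h (x, y) \<partial>lborel \<partial>lborel)"
  proof (intro nn_integral_cong)
    fix x
    have "(\<lambda>y. h (x, y)) \<in> borel_measurable borel"
      using hm by measurable
    then show "(\<integral>\<^sup>+y. h (x, \<phi> x y) \<partial>lborel) = a * \<integral>\<^sup>+y. h (x, y) \<partial>lborel"
      using sc[of "\<lambda>y. h (x, y)" x] by simp
  qed
  also have "\<dots> = a * (\<integral>\<^sup>+x. \<integral>\<^sup>+y. h (x, y) \<partial>lborel \<partial>lborel)"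
    using inner by (rule nn_integral_cmult)
  also have "\<dots> = a * (\<integral>\<^sup>+z. h z \<partial>(lborel \<Otimes>\<^sub>M lborel))"
    using lborel.nn_integral_fst[OF hm'] by simp
  also have "\<dots> = a * (\<integral>\<^sup>+z. h z \<partial>lborel)"
    by (simp add: lborel_prod)
  finally show "(\<integral>\<^sup>+z. h (fst z, \<phi> (fst z) (snd z)) \<partial>lborel) = a * (\<integral>\<^sup>+z. h z \<partial>lborel)" .
qed

lemma nn_integral_translate:
  fixes g :: "'a::euclidean_space \<Rightarrow> ennreal"
  assumes [measurable]: "g \<in> borel_measurable borel"
  shows "(\<integral>\<^sup>+x. g (x + t) \<partial>lborel) = 1 * (\<integral>\<^sup>+x. g x \<partial>lborel)"
proof -
  have "(\<integral>\<^sup>+x. g x \<partial>lborel) = (\<integral>\<^sup>+x. g x \<partial>distr lborel borel ((+) t))"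
    by (simp add: lborel_distr_plus)
  also have "\<dots> = (\<integral>\<^sup>+x. g (t + x) \<partial>lborel)"
    by (subst nn_integral_distr) auto
  finally show ?thesis by (simp add: add.commute)
qed

lemma nn_integral_scale:
  fixes g :: "'a::euclidean_space \<Rightarrow> ennreal"
  assumes [measurable]: "g \<in> borel_measurable borel" and c: "c \<noteq> 0"
  shows "(\<integral>\<^sup>+x. g (c *\<^sub>R x) \<partial>lborel) = ennreal (1 / \<bar>c\<bar> ^ DIM('a)) * (\<integral>\<^sup>+x. g x \<partial>lborel)"
proof -
  have "(\<integral>\<^sup>+x. g x \<partial>lborel) = (\<integral>\<^sup>+x. g x \<partial>density (distr lborel borel (\<lambda>x. 0 + c *\<^sub>R x)) (\<lambda>_. \<bar>c\<bar> ^ DIM('a)))"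
    using lborel_affine[OF c, of "0::'a"] by simp
  also have "\<dots> = (\<integral>\<^sup>+x. ennreal (\<bar>c\<bar> ^ DIM('a)) * g (c *\<^sub>R x) \<partial>lborel)"
    by (subst nn_integral_density) (auto simp: nn_integral_distr)
  also have "\<dots> = ennreal (\<bar>c\<bar> ^ DIM('a)) * (\<integral>\<^sup>+x. g (c *\<^sub>R x) \<partial>lborel)"
    by (rule nn_integral_cmult) measurable
  finally have eq: "(\<integral>\<^sup>+x. g x \<partial>lborel) = ennreal (\<bar>c\<bar> ^ DIM('a)) * (\<integral>\<^sup>+x. g (c *\<^sub>R x) \<partial>lborel)" .
  have "ennreal (1 / \<bar>c\<bar> ^ DIM('a)) * ennreal (\<bar>c\<bar> ^ DIM('a)) = 1"
    using c by (simp add: ennreal_mult''[symmetric] del: ennreal_1)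
  then show ?thesis
    by (simp add: eq mult.assoc[symmetric])
qed

lemma nnscale_shear1: "nnscale (\<lambda>z::'a::euclidean_space \<times> 'a. (fst z + s *\<^sub>R snd z, snd z)) 1"
proof (rule nnscale_fst[where \<phi> = "\<lambda>y x. x + s *\<^sub>R y"])
  show "(\<lambda>z::'a \<times> 'a. (fst z + s *\<^sub>R snd z, snd z)) \<in> borel_measurable borel"
    by (intro borel_measurable_continuous_onI continuous_intros)
qed (rule nn_integral_translate)

lemma nnscale_shear2: "nnscale (\<lambda>z::'a::euclidean_space \<times> 'a. (fst z, snd z + s *\<^sub>R fst z)) 1"
proof (rule nnscale_snd[where \<phi> = "\<lambda>y x. x + s *\<^sub>R y"])
  show "(\<lambda>z::'a \<times> 'a. (fst z, snd z + s *\<^sub>R fst z)) \<in> borel_measurable borel"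
    by (intro borel_measurable_continuous_onI continuous_intros)
qed (rule nn_integral_translate)

lemma nnscale_scale1:
  assumes "c \<noteq> 0"
  shows "nnscale (\<lambda>z::'a::euclidean_space \<times> 'a. (c *\<^sub>R fst z, snd z)) (ennreal (1 / \<bar>c\<bar> ^ DIM('a)))"
proof (rule nnscale_fst[where \<phi> = "\<lambda>y x. c *\<^sub>R x"])
  show "(\<lambda>z::'a \<times> 'a. (c *\<^sub>R fst z, snd z)) \<in> borel_measurable borel"
    by (intro borel_measurable_continuous_onI continuous_intros)
qed (rule nn_integral_scale[OF _ assms])

lemma nnscale_orth1:
  fixes g :: "'a::euclidean_space \<Rightarrow> 'a"
  assumes g: "orthogonal_transformation g"
  shows "nnscale (\<lambda>z::'a \<times> 'a. (g (fst z), snd z)) 1"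
proof (rule nnscale_fst[where \<phi> = "\<lambda>y x. g x"])
  have lin: "linear g" using g by (rule orthogonal_transformation_linear)
  have "continuous_on UNIV g"
    by (intro linear_continuous_on linear_conv_bounded_linear[THEN iffD1] lin)
  then have "continuous_on UNIV (\<lambda>z::'a \<times> 'a. g (fst z))"
    using continuous_on_compose[OF continuous_on_fst[OF continuous_on_id], of UNIV g]
    by (simp add: o_def continuous_on_subset)
  then show "(\<lambda>z::'a \<times> 'a. (g (fst z), snd z)) \<in> borel_measurable borel"
    by (intro borel_measurable_continuous_onI continuous_intros)
qed (simp add: nn_integral_orth[OF g])

definition coll_c :: "nat \<Rightarrow> nat \<Rightarrow> nat \<Rightarrow> real" where
  "coll_c m m1 m' = sqrt (real m * real m1) / real (m + m1) *
     (sqrt (real (m + m1 - m') / real m') + sqrt (real m' / real (m + m1 - m')))"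

lemma coll_c_pos:
  assumes "1 \<le> m" "1 \<le> m1" "1 \<le> m'" "m' \<le> m + m1 - 1"
  shows "coll_c m m1 m' > 0"
proof -
  have "real (m + m1 - m') > 0" using assms by simp
  moreover have "real m' > 0" using assms by simp
  ultimately show ?thesis using assms unfolding coll_c_def
    by (intro mult_pos_pos divide_pos_pos add_pos_pos) auto
qed

lemma post_v_eq:
  "post_v m m1 m' v v1 \<Omega> = (1 / real (m + m1)) *\<^sub>R (real m *\<^sub>R v + real m1 *\<^sub>R v1)
     + (sqrt (real m * real m1) / real (m + m1) * sqrt (real (m + m1 - m') / real m')) *\<^sub>R refl_map \<Omega> (v - v1)"
  by (simp add: post_v_def refl_map_def)

lemma post_v1_eq:
  "post_v1 m m1 m' v v1 \<Omega> = (1 / real (m + m1)) *\<^sub>R (real m *\<^sub>R v + real m1 *\<^sub>R v1)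
     - (sqrt (real m * real m1) / real (m + m1) * sqrt (real m' / real (m + m1 - m'))) *\<^sub>R refl_map \<Omega> (v - v1)"
  by (simp add: post_v1_def refl_map_def)

lemma coll_vel_nnscale:
  fixes \<Omega> :: "'a::euclidean_space"
  assumes \<Omega>: "norm \<Omega> = 1" and k: "1 \<le> m" "1 \<le> m1" "1 \<le> m'" "m' \<le> m + m1 - 1"
  shows "nnscale (\<lambda>z. (post_v m m1 m' (fst z) (snd z) \<Omega>, post_v1 m m1 m' (fst z) (snd z) \<Omega>))
           (ennreal (1 / coll_c m m1 m' ^ DIM('a)))"
proof -
  define M where "M = real (m + m1)"
  define p where "p = real m'"
  define q where "q = real (m + m1 - m')"
  define s where "s = sqrt (real m * real m1) / M"
  define \<alpha> where "\<alpha> = s * sqrt (q / p)"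
  define \<beta> where "\<beta> = s * sqrt (p / q)"
  define c where "c = coll_c m m1 m'"
  have p0: "p > 0" and q0: "q > 0" using k by (auto simp: p_def q_def)
  have Mpq: "M = p + q" using k by (simp add: M_def p_def q_def)
  have M0: "M > 0" using p0 q0 Mpq by simp
  have c_ab: "c = \<alpha> + \<beta>"
    by (simp add: c_def coll_c_def \<alpha>_def \<beta>_def s_def M_def p_def q_def distrib_left)
  have c0: "c > 0" using coll_c_pos[OF k] by (simp add: c_def)
  have pq: "p * sqrt (q / p) = q * sqrt (p / q)"
  proof -
    have sp: "sqrt p * sqrt p = p" and sq: "sqrt q * sqrt q = q" using p0 q0 by simp_all
    have sp0: "sqrt p > 0" and sq0: "sqrt q > 0" using p0 q0 by simp_all
    have "p * sqrt (q / p) = (sqrt p * sqrt p) * (sqrt q / sqrt p)"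
      by (simp only: sp real_sqrt_divide)
    also have "\<dots> = sqrt p * sqrt q" using sp0 by (simp add: field_simps)
    also have "\<dots> = (sqrt q * sqrt q) * (sqrt p / sqrt q)" using sq0 by (simp add: field_simps)
    also have "\<dots> = q * sqrt (p / q)" by (simp only: sq real_sqrt_divide)
    finally show ?thesis .
  qed
  have hb: "(p / M) * c = \<beta>"
  proof -
    have "p * c = p * \<alpha> + p * \<beta>" by (simp add: c_ab distrib_left)
    also have "p * \<alpha> = q * \<beta>" using pq by (simp add: \<alpha>_def \<beta>_def)
    finally have "p * c = M * \<beta>" by (simp add: Mpq distrib_right)
    then show ?thesis using M0 by (simp add: field_simps)
  qed
  have hV: "v1 + (real m / M) *\<^sub>R (v - v1) = (1 / M) *\<^sub>R (real m *\<^sub>R v + real m1 *\<^sub>R v1)" for v v1 :: 'a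
  proof -
    have "M = real m + real m1" by (simp add: M_def)
    then have "(1 / M) *\<^sub>R (real m *\<^sub>R v + real m1 *\<^sub>R v1) = (real m / M) *\<^sub>R v + (real m1 / M) *\<^sub>R v1"
      by (simp add: scaleR_add_right)
    also have "real m1 / M = 1 - real m / M" using M0 \<open>M = real m + real m1\<close> by (simp add: field_simps)
    finally show ?thesis by (simp add: algebra_simps)
  qed
  have orth: "orthogonal_transformation (refl_map \<Omega>)" using \<Omega> by (rule orth_refl_map)
  have n1: "nnscale ((\<lambda>z::'a \<times> 'a. (fst z, snd z + (real m / M) *\<^sub>R fst z)) \<circ> (\<lambda>z. (fst z + (-1) *\<^sub>R snd z, snd z))) (1 * 1)"
    by (rule nnscale_comp[OF nnscale_shear1 nnscale_shear2])
  have n2: "nnscale ((\<lambda>z::'a \<times> 'a. (refl_map \<Omega> (fst z), snd z)) \<circ> ((\<lambda>z::'a \<times> 'a. (fst z, snd z + (real m / M) *\<^sub>R fst z)) \<circ> (\<lambda>z. (fst z + (-1) *\<^sub>R snd z, snd z)))) (1 * 1 * 1)"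
    by (rule nnscale_comp[OF n1 nnscale_orth1[OF orth]])
  have n3: "nnscale ((\<lambda>z::'a \<times> 'a. (c *\<^sub>R fst z, snd z)) \<circ> ((\<lambda>z::'a \<times> 'a. (refl_map \<Omega> (fst z), snd z)) \<circ> ((\<lambda>z::'a \<times> 'a. (fst z, snd z + (real m / M) *\<^sub>R fst z)) \<circ> (\<lambda>z. (fst z + (-1) *\<^sub>R snd z, snd z))))) (1 * 1 * 1 * ennreal (1 / \<bar>c\<bar> ^ DIM('a)))"
    by (rule nnscale_comp[OF n2 nnscale_scale1]) (use c0 in simp)
  have n4: "nnscale ((\<lambda>z::'a \<times> 'a. (fst z, snd z + (- (p / M)) *\<^sub>R fst z)) \<circ> ((\<lambda>z::'a \<times> 'a. (c *\<^sub>R fst z, snd z)) \<circ> ((\<lambda>z::'a \<times> 'a. (refl_map \<Omega> (fst z), snd z)) \<circ> ((\<lambda>z::'a \<times> 'a. (fst z, snd z + (real m / M) *\<^sub>R fst z)) \<circ> (\<lambda>z. (fst z + (-1) *\<^sub>R snd z, snd z)))))) (1 * 1 * 1 * ennreal (1 / \<bar>c\<bar> ^ DIM('a)) * 1)"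
    by (rule nnscale_comp[OF n3 nnscale_shear2])
  have n5: "nnscale ((\<lambda>z::'a \<times> 'a. (fst z + 1 *\<^sub>R snd z, snd z)) \<circ> ((\<lambda>z::'a \<times> 'a. (fst z, snd z + (- (p / M)) *\<^sub>R fst z)) \<circ> ((\<lambda>z::'a \<times> 'a. (c *\<^sub>R fst z, snd z)) \<circ> ((\<lambda>z::'a \<times> 'a. (refl_map \<Omega> (fst z), snd z)) \<circ> ((\<lambda>z::'a \<times> 'a. (fst z, snd z + (real m / M) *\<^sub>R fst z)) \<circ> (\<lambda>z. (fst z + (-1) *\<^sub>R snd z, snd z))))))) (1 * 1 * 1 * ennreal (1 / \<bar>c\<bar> ^ DIM('a)) * 1 * 1)"
    by (rule nnscale_comp[OF n4 nnscale_shear1])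
  have feq: "((\<lambda>z::'a \<times> 'a. (fst z + 1 *\<^sub>R snd z, snd z)) \<circ> ((\<lambda>z::'a \<times> 'a. (fst z, snd z + (- (p / M)) *\<^sub>R fst z)) \<circ> ((\<lambda>z::'a \<times> 'a. (c *\<^sub>R fst z, snd z)) \<circ> ((\<lambda>z::'a \<times> 'a. (refl_map \<Omega> (fst z), snd z)) \<circ> ((\<lambda>z::'a \<times> 'a. (fst z, snd z + (real m / M) *\<^sub>R fst z)) \<circ> (\<lambda>z. (fst z + (-1) *\<^sub>R snd z, snd z)))))))
      = (\<lambda>z. (post_v m m1 m' (fst z) (snd z) \<Omega>, post_v1 m m1 m' (fst z) (snd z) \<Omega>))"
  proof (rule ext)
    fix z :: "'a \<times> 'a"
    obtain v v1 where z: "z = (v, v1)" by (cases z)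
    define r where "r = refl_map \<Omega> (v - v1)"
    define V where "V = (1 / M) *\<^sub>R (real m *\<^sub>R v + real m1 *\<^sub>R v1)"
    have e1: "post_v m m1 m' v v1 \<Omega> = V + \<alpha> *\<^sub>R r"
      by (simp add: post_v_eq V_def r_def \<alpha>_def s_def M_def p_def q_def)
    have e2: "post_v1 m m1 m' v v1 \<Omega> = V - \<beta> *\<^sub>R r"
      by (simp add: post_v1_eq V_def r_def \<beta>_def s_def M_def p_def q_def)
    have e3: "v1 + (real m / M) *\<^sub>R (v - v1) = V" unfolding V_def by (rule hV)
    have e4: "(- (p / M)) *\<^sub>R (c *\<^sub>R r) = - (\<beta> *\<^sub>R r)"
      using hb by simp
    have e5: "c *\<^sub>R r - \<beta> *\<^sub>R r = \<alpha> *\<^sub>R r"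
      by (simp add: c_ab algebra_simps)
    have lhs: "((\<lambda>z::'a \<times> 'a. (fst z + 1 *\<^sub>R snd z, snd z)) \<circ> ((\<lambda>z::'a \<times> 'a. (fst z, snd z + (- (p / M)) *\<^sub>R fst z)) \<circ> ((\<lambda>z::'a \<times> 'a. (c *\<^sub>R fst z, snd z)) \<circ> ((\<lambda>z::'a \<times> 'a. (refl_map \<Omega> (fst z), snd z)) \<circ> ((\<lambda>z::'a \<times> 'a. (fst z, snd z + (real m / M) *\<^sub>R fst z)) \<circ> (\<lambda>z. (fst z + (-1) *\<^sub>R snd z, snd z))))))) z
       = (c *\<^sub>R r + (V + (- (p / M)) *\<^sub>R (c *\<^sub>R r)), V + (- (p / M)) *\<^sub>R (c *\<^sub>R r))"
      using e3 by (simp add: z r_def)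
    show "((\<lambda>z::'a \<times> 'a. (fst z + 1 *\<^sub>R snd z, snd z)) \<circ> ((\<lambda>z::'a \<times> 'a. (fst z, snd z + (- (p / M)) *\<^sub>R fst z)) \<circ> ((\<lambda>z::'a \<times> 'a. (c *\<^sub>R fst z, snd z)) \<circ> ((\<lambda>z::'a \<times> 'a. (refl_map \<Omega> (fst z), snd z)) \<circ> ((\<lambda>z::'a \<times> 'a. (fst z, snd z + (real m / M) *\<^sub>R fst z)) \<circ> (\<lambda>z. (fst z + (-1) *\<^sub>R snd z, snd z))))))) z
       = (post_v m m1 m' (fst z) (snd z) \<Omega>, post_v1 m m1 m' (fst z) (snd z) \<Omega>)"
      unfolding lhs e4 using e1 e2 e5 by (simp add: z algebra_simps)
  qed
  have "1 * 1 * 1 * ennreal (1 / \<bar>c\<bar> ^ DIM('a)) * 1 * 1 = ennreal (1 / coll_c m m1 m' ^ DIM('a))"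
    using c0 by (simp add: c_def)
  then show ?thesis using n5 feq by simp
qed

definition nrm :: "'a::euclidean_space \<Rightarrow> 'a" where "nrm x = x /\<^sub>R norm x"

lemma nrm_meas [measurable]: "nrm \<in> borel_measurable borel"
  unfolding nrm_def by measurable

lemma sphere_measure_alt:
  "sphere_measure = scale_measure (of_nat DIM('a)) (distr (restrict_space lborel (ball 0 1)) borel (nrm :: 'a::euclidean_space \<Rightarrow> 'a))"
  by (simp add: sphere_measure_def nrm_def[abs_def])

lemma sets_sphere_measure [simp, measurable_cong]: "sets (sphere_measure :: 'a::euclidean_space measure) = sets borel"
  by (simp add: sphere_measure_def)

lemma space_sphere_measure [simp]: "space (sphere_measure :: 'a::euclidean_space measure) = UNIV"
  using sets_eq_imp_space_eq[OF sets_sphere_measure] by simp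

lemma emeasure_sphere_measure:
  assumes "A \<in> sets borel"
  shows "emeasure (sphere_measure :: 'a::euclidean_space measure) A =
     of_nat DIM('a) * emeasure lborel (nrm -` A \<inter> ball 0 1)"
proof -
  have "emeasure (restrict_space lborel (ball (0::'a) 1)) (nrm -` A \<inter> space (restrict_space lborel (ball 0 1)))
      = emeasure lborel (nrm -` A \<inter> ball (0::'a) 1)"
    by (subst emeasure_restrict_space) auto
  moreover have "nrm \<in> measurable (restrict_space lborel (ball (0::'a) 1)) borel"
    by (rule measurable_restrict_space1) simp
  ultimately show ?thesis
    using assms by (simp add: sphere_measure_alt emeasure_distr)
qed

lemma finite_measure_sphere: "finite_measure (sphere_measure :: 'a::euclidean_space measure)"
proof
  have "emeasure lborel (nrm -` UNIV \<inter> ball (0::'a) 1) < \<infinity>"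
    by (intro emeasure_bounded_finite) auto
  then show "emeasure (sphere_measure :: 'a measure) (space sphere_measure) \<noteq> \<infinity>"
    by (simp add: emeasure_sphere_measure ennreal_mult_eq_top_iff)
qed

lemma sigma_finite_sphere: "sigma_finite_measure (sphere_measure :: 'a::euclidean_space measure)"
  using finite_measure_sphere by (rule finite_measure.axioms(1))

lemma AE_sphere_norm: "AE \<Omega> in (sphere_measure :: 'a::euclidean_space measure). norm \<Omega> = 1"
proof (rule AE_I')
  let ?N = "{\<Omega>::'a. norm \<Omega> \<noteq> 1}"
  have Nb: "?N \<in> sets borel" by measurable
  have pre: "nrm -` ?N \<inter> ball 0 1 = {0::'a}"
  proof -
    have h: "x \<noteq> 0 \<Longrightarrow> norm (nrm x) = 1" for x :: 'a by (simp add: nrm_def)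
    have "nrm (0::'a) = 0" by (simp add: nrm_def)
    then show ?thesis using h by auto
  qed
  have "emeasure (sphere_measure :: 'a measure) ?N = 0"
    unfolding emeasure_sphere_measure[OF Nb] pre by (simp add: emeasure_lborel_countable)
  then show "?N \<in> null_sets sphere_measure" using Nb by (simp add: null_sets_def)
qed auto

lemma nn_integral_sphere:
  fixes f :: "'a::euclidean_space \<Rightarrow> ennreal"
  assumes [measurable]: "f \<in> borel_measurable borel"
  shows "(\<integral>\<^sup>+\<Omega>. f \<Omega> \<partial>sphere_measure) = of_nat DIM('a) * (\<integral>\<^sup>+x. f (nrm x) * indicator (ball 0 1) x \<partial>lborel)"
proof -
  have m: "nrm \<in> measurable (restrict_space lborel (ball (0::'a) 1)) borel"
    by (rule measurable_restrict_space1) simp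
  have "(\<integral>\<^sup>+\<Omega>. f \<Omega> \<partial>sphere_measure) = of_nat DIM('a) * (\<integral>\<^sup>+\<Omega>. f \<Omega> \<partial>distr (restrict_space lborel (ball (0::'a) 1)) borel nrm)"
    unfolding sphere_measure_alt by (rule nn_integral_scale_measure) simp
  also have "(\<integral>\<^sup>+\<Omega>. f \<Omega> \<partial>distr (restrict_space lborel (ball (0::'a) 1)) borel nrm) = (\<integral>\<^sup>+x. f (nrm x) \<partial>restrict_space lborel (ball (0::'a) 1))"
    by (rule nn_integral_distr[OF m]) simp
  also have "\<dots> = (\<integral>\<^sup>+x. f (nrm x) * indicator (ball 0 1) x \<partial>lborel)"
    by (rule nn_integral_restrict_space) simp
  finally show ?thesis .
qed

lemma nn_integral_sphere_neg:
  fixes G :: "'a::euclidean_space \<Rightarrow> ennreal"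
  assumes [measurable]: "G \<in> borel_measurable borel"
  shows "(\<integral>\<^sup>+\<Omega>. G (- \<Omega>) \<partial>sphere_measure) = (\<integral>\<^sup>+\<Omega>. G \<Omega> \<partial>sphere_measure)"
proof -
  have orth: "orthogonal_transformation (\<lambda>x::'a. - x)"
    using orthogonal_transformation_neg[of "\<lambda>x. x"] by simp
  define K where "K x = G (nrm x) * indicator (ball (0::'a) 1) x" for x
  have [measurable]: "ball (0::'a) 1 \<in> sets borel" by simp
  have Km [measurable]: "K \<in> borel_measurable borel" unfolding K_def by measurable
  have "(\<integral>\<^sup>+x. G (- nrm x) * indicator (ball 0 1) x \<partial>lborel) = (\<integral>\<^sup>+x. K (- x) \<partial>lborel)"
    by (intro nn_integral_cong) (simp add: K_def nrm_def indicator_def)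
  also have "\<dots> = (\<integral>\<^sup>+x. K x \<partial>lborel)"
    using nn_integral_orth[OF orth Km] .
  finally show ?thesis
    by (simp add: nn_integral_sphere K_def)
qed

lemma coll_space_eq: "(coll_space :: (('a::euclidean_space \<times> 'a) \<times> 'a) measure) = lborel \<Otimes>\<^sub>M sphere_measure"
  by (simp add: coll_space_def lborel_prod)

lemma sets_coll_space [simp, measurable_cong]:
  "sets (coll_space :: (('a::euclidean_space \<times> 'a) \<times> 'a) measure) = sets borel"
proof -
  have "sets (coll_space :: (('a \<times> 'a) \<times> 'a) measure) = sets (borel \<Otimes>\<^sub>M borel)"
    unfolding coll_space_eq by (rule sets_pair_measure_cong) simp_all
  then show ?thesis by (metis borel_prod)
qed

lemma space_coll_space [simp]: "space (coll_space :: (('a::euclidean_space \<times> 'a) \<times> 'a) measure) = UNIV"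
  using sets_eq_imp_space_eq[OF sets_coll_space] by simp

definition coll_T :: "nat \<Rightarrow> nat \<Rightarrow> nat \<Rightarrow> ('a::euclidean_space \<times> 'a) \<times> 'a \<Rightarrow> ('a \<times> 'a) \<times> 'a" where
  "coll_T m m1 m' x = ((post_v m m1 m' (fst (fst x)) (snd (fst x)) (snd x),
                        post_v1 m m1 m' (fst (fst x)) (snd (fst x)) (snd x)), - snd x)"

lemma coll_T_borel [measurable]: "coll_T m m1 m' \<in> borel_measurable borel"
  unfolding coll_T_def post_v_def post_v1_def
  by (intro borel_measurable_continuous_onI continuous_intros)

lemma coll_T_meas: "coll_T m m1 m' \<in> measurable coll_space coll_space"
  using coll_T_borel by (simp add: measurable_cong_sets[OF sets_coll_space sets_coll_space])

lemma meas_lborel_sphere: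
  "(f \<in> borel_measurable ((lborel :: ('a::euclidean_space \<times> 'a) measure) \<Otimes>\<^sub>M (sphere_measure :: 'a measure)))
   = (f \<in> borel_measurable borel)"
proof -
  have S: "sets ((lborel :: ('a \<times> 'a) measure) \<Otimes>\<^sub>M (sphere_measure :: 'a measure)) = sets borel"
    using sets_coll_space[where 'a='a] unfolding coll_space_eq .
  show ?thesis by (subst measurable_cong_sets[OF S refl]) (rule refl)
qed

lemma meas_lborel_borel:
  "(f \<in> borel_measurable ((lborel :: ('a::euclidean_space \<times> 'a) measure) \<Otimes>\<^sub>M (borel :: 'a measure)))
   = (f \<in> borel_measurable borel)"
proof -
  have "sets ((lborel :: ('a \<times> 'a) measure) \<Otimes>\<^sub>M (borel :: 'a measure)) = sets (borel \<Otimes>\<^sub>M borel)"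
    by (rule sets_pair_measure_cong) simp_all
  then have "sets ((lborel :: ('a \<times> 'a) measure) \<Otimes>\<^sub>M (borel :: 'a measure)) = sets borel"
    by (metis borel_prod)
  then show ?thesis by (subst measurable_cong_sets[OF _ refl]) (assumption, rule refl)
qed

lemma coll_nn_cov:
  fixes G :: "('a::euclidean_space \<times> 'a) \<times> 'a \<Rightarrow> ennreal"
  assumes k: "1 \<le> m" "1 \<le> m1" "1 \<le> m'" "m' \<le> m + m1 - 1"
    and Gm [measurable]: "G \<in> borel_measurable borel"
  shows "(\<integral>\<^sup>+x. G (coll_T m m1 m' x) \<partial>coll_space)
       = ennreal (1 / coll_c m m1 m' ^ DIM('a)) * (\<integral>\<^sup>+x. G x \<partial>coll_space)"
proof -
  interpret sph: sigma_finite_measure "sphere_measure :: 'a measure" by (rule sigma_finite_sphere)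
  interpret P: pair_sigma_finite "lborel :: ('a \<times> 'a) measure" "sphere_measure :: 'a measure"
    by unfold_locales
  define J where "J = ennreal (1 / coll_c m m1 m' ^ DIM('a))"
  define H where "H \<Omega> = (\<integral>\<^sup>+w. G (w, \<Omega>) \<partial>lborel)" for \<Omega> :: 'a
  have GT: "(\<lambda>x. G (coll_T m m1 m' x)) \<in> borel_measurable (lborel \<Otimes>\<^sub>M sphere_measure)"
    unfolding meas_lborel_sphere by measurable
  have Gm': "G \<in> borel_measurable (lborel \<Otimes>\<^sub>M sphere_measure)"
    unfolding meas_lborel_sphere by measurable
  have Hm [measurable]: "H \<in> borel_measurable borel"
  proof -
    have "G \<in> borel_measurable (lborel \<Otimes>\<^sub>M borel)" unfolding meas_lborel_borel by measurable
    then have "(\<lambda>(\<Omega>, w). G (w, \<Omega>)) \<in> borel_measurable (borel \<Otimes>\<^sub>M lborel)"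
      by (rule measurable_pair_swap)
    then have "case_prod (\<lambda>\<Omega> w. G (w, \<Omega>)) \<in> borel_measurable (borel \<Otimes>\<^sub>M lborel)" by simp
    then show ?thesis unfolding H_def by (rule lborel.borel_measurable_nn_integral)
  qed
  have "(\<integral>\<^sup>+x. G (coll_T m m1 m' x) \<partial>coll_space)
      = (\<integral>\<^sup>+\<Omega>. \<integral>\<^sup>+w. G (coll_T m m1 m' (w, \<Omega>)) \<partial>lborel \<partial>sphere_measure)"
    unfolding coll_space_eq using P.nn_integral_snd[OF GT] by simp
  also have "\<dots> = (\<integral>\<^sup>+\<Omega>. J * H (- \<Omega>) \<partial>sphere_measure)"
  proof (rule nn_integral_cong_AE)
    show "AE \<Omega> in sphere_measure. (\<integral>\<^sup>+w. G (coll_T m m1 m' (w, \<Omega>)) \<partial>lborel) = J * H (- \<Omega>)"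
      using AE_sphere_norm
    proof (rule eventually_mono)
      fix \<Omega> :: 'a assume \<Omega>: "norm \<Omega> = 1"
      have hm: "(\<lambda>w. G (w, - \<Omega>)) \<in> borel_measurable borel" by measurable
      have "(\<integral>\<^sup>+w. G (coll_T m m1 m' (w, \<Omega>)) \<partial>lborel)
          = (\<integral>\<^sup>+w. (\<lambda>w. G (w, - \<Omega>)) (post_v m m1 m' (fst w) (snd w) \<Omega>, post_v1 m m1 m' (fst w) (snd w) \<Omega>) \<partial>lborel)"
        by (simp add: coll_T_def)
      also have "\<dots> = J * (\<integral>\<^sup>+w. G (w, - \<Omega>) \<partial>lborel)"
        using coll_vel_nnscale[OF \<Omega> k] hm unfolding nnscale_def J_def by blast
      finally show "(\<integral>\<^sup>+w. G (coll_T m m1 m' (w, \<Omega>)) \<partial>lborel) = J * H (- \<Omega>)"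
        by (simp add: H_def)
    qed
  qed
  also have "\<dots> = J * (\<integral>\<^sup>+\<Omega>. H (- \<Omega>) \<partial>sphere_measure)"
    by (rule nn_integral_cmult) measurable
  also have "(\<integral>\<^sup>+\<Omega>. H (- \<Omega>) \<partial>sphere_measure) = (\<integral>\<^sup>+\<Omega>. H \<Omega> \<partial>sphere_measure)"
    by (rule nn_integral_sphere_neg) measurable
  also have "(\<integral>\<^sup>+\<Omega>. H \<Omega> \<partial>sphere_measure) = (\<integral>\<^sup>+x. G x \<partial>coll_space)"
    unfolding coll_space_eq H_def using P.nn_integral_snd[OF Gm'] by simp
  finally show ?thesis by (simp add: J_def)
qed

lemma coll_distr:
  assumes k: "1 \<le> m" "1 \<le> m1" "1 \<le> m'" "m' \<le> m + m1 - 1"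
  shows "distr coll_space coll_space (coll_T m m1 m') =
         density (coll_space :: (('a::euclidean_space \<times> 'a) \<times> 'a) measure) (\<lambda>_. ennreal (1 / coll_c m m1 m' ^ DIM('a)))"
proof (rule measure_eqI)
  show "sets (distr coll_space coll_space (coll_T m m1 m')) = sets (density (coll_space :: (('a \<times> 'a) \<times> 'a) measure) (\<lambda>_. ennreal (1 / coll_c m m1 m' ^ DIM('a))))"
    by simp
  fix A :: "(('a \<times> 'a) \<times> 'a) set" assume "A \<in> sets (distr coll_space coll_space (coll_T m m1 m'))"
  then have A [measurable]: "A \<in> sets (borel :: (('a \<times> 'a) \<times> 'a) measure)" by simp
  have "emeasure (distr coll_space coll_space (coll_T m m1 m')) A = emeasure coll_space (coll_T m m1 m' -` A)"
    using A by (subst emeasure_distr[OF coll_T_meas]) auto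
  also have "\<dots> = (\<integral>\<^sup>+x. indicator (coll_T m m1 m' -` A) x \<partial>coll_space)"
    using measurable_sets_borel[OF coll_T_borel A] by (intro nn_integral_indicator[symmetric]) simp
  also have "\<dots> = (\<integral>\<^sup>+x. indicator A (coll_T m m1 m' x) \<partial>coll_space)"
    by (simp add: indicator_vimage)
  also have "\<dots> = ennreal (1 / coll_c m m1 m' ^ DIM('a)) * (\<integral>\<^sup>+x. indicator A x \<partial>coll_space)"
    by (rule coll_nn_cov[OF k]) measurable
  also have "\<dots> = emeasure (density coll_space (\<lambda>_. ennreal (1 / coll_c m m1 m' ^ DIM('a)))) A"
    using A by (simp add: emeasure_density nn_integral_cmult_indicator)
  finally show "emeasure (distr coll_space coll_space (coll_T m m1 m')) A = emeasure (density (coll_space :: (('a \<times> 'a) \<times> 'a) measure) (\<lambda>_. ennreal (1 / coll_c m m1 m' ^ DIM('a)))) A" .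
qed

lemma coll_int_cov:
  fixes F :: "('a::euclidean_space \<times> 'a) \<times> 'a \<Rightarrow> real"
  assumes k: "1 \<le> m" "1 \<le> m1" "1 \<le> m'" "m' \<le> m + m1 - 1"
    and F: "integrable coll_space F"
  shows "integrable coll_space (\<lambda>x. F (coll_T m m1 m' x))"
    and "(\<integral>x. F (coll_T m m1 m' x) \<partial>coll_space) = (1 / coll_c m m1 m' ^ DIM('a)) * (\<integral>x. F x \<partial>coll_space)"
proof -
  define j where "j = 1 / coll_c m m1 m' ^ DIM('a)"
  have j0: "j \<ge> 0" using coll_c_pos[OF k] by (simp add: j_def)
  have Fm: "F \<in> borel_measurable coll_space" using F by (rule borel_measurable_integrable)
  have D: "distr coll_space coll_space (coll_T m m1 m') = density (coll_space :: (('a \<times> 'a) \<times> 'a) measure) (\<lambda>_. ennreal j)"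
    unfolding j_def by (rule coll_distr[OF k])
  have "integrable coll_space (\<lambda>x. F (coll_T m m1 m' x)) \<longleftrightarrow> integrable (distr coll_space coll_space (coll_T m m1 m')) F"
    by (rule integrable_distr_eq[OF coll_T_meas Fm, symmetric])
  also have "\<dots> \<longleftrightarrow> integrable coll_space (\<lambda>x. j *\<^sub>R F x)"
    unfolding D using j0 by (intro integrable_density Fm) auto
  finally show "integrable coll_space (\<lambda>x. F (coll_T m m1 m' x))"
    using F by simp
  have "(\<integral>x. F (coll_T m m1 m' x) \<partial>coll_space) = (\<integral>x. F x \<partial>distr coll_space coll_space (coll_T m m1 m'))"
    by (rule integral_distr[OF coll_T_meas Fm, symmetric])
  also have "\<dots> = (\<integral>x. j *\<^sub>R F x \<partial>coll_space)"
    unfolding D using j0 by (intro integral_density Fm) auto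
  also have "\<dots> = j * (\<integral>x. F x \<partial>coll_space)" by simp
  finally show "(\<integral>x. F (coll_T m m1 m' x) \<partial>coll_space) = (1 / coll_c m m1 m' ^ DIM('a)) * (\<integral>x. F x \<partial>coll_space)"
    by (simp add: j_def)
qed

lemma refl_map_neg [simp]: "refl_map (- \<Omega>) u = refl_map \<Omega> u"
  by (simp add: refl_map_def)

lemma refl_map_props:
  fixes \<Omega> u :: "'a::euclidean_space"
  assumes "norm \<Omega> = 1"
  shows "refl_map \<Omega> (refl_map \<Omega> u) = u"
    and "refl_map \<Omega> u \<bullet> \<Omega> = - (u \<bullet> \<Omega>)"
    and "norm (refl_map \<Omega> u) = norm u"
    and "refl_map \<Omega> (c *\<^sub>R u) = c *\<^sub>R refl_map \<Omega> u"
proof -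
  have oo: "\<Omega> \<bullet> \<Omega> = 1" using assms by (simp add: dot_square_norm)
  show h: "refl_map \<Omega> u \<bullet> \<Omega> = - (u \<bullet> \<Omega>)"
    using oo by (simp add: refl_map_def inner_diff_left)
  have "refl_map \<Omega> (refl_map \<Omega> u) = refl_map \<Omega> u - (2 * (refl_map \<Omega> u \<bullet> \<Omega>)) *\<^sub>R \<Omega>"
    by (simp only: refl_map_def[of \<Omega> "refl_map \<Omega> u"])
  also have "\<dots> = refl_map \<Omega> u + (2 * (u \<bullet> \<Omega>)) *\<^sub>R \<Omega>" using h by simp
  also have "\<dots> = u" by (simp add: refl_map_def)
  finally show "refl_map \<Omega> (refl_map \<Omega> u) = u" .
  show "norm (refl_map \<Omega> u) = norm u"
    using orth_refl_map[OF assms] by (rule orthogonal_transformation_norm)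
  show "refl_map \<Omega> (c *\<^sub>R u) = c *\<^sub>R refl_map \<Omega> u"
    by (simp add: refl_map_def algebra_simps)
qed

lemma coll_ab:
  assumes k: "1 \<le> m" "1 \<le> m1" "1 \<le> m'" "m' \<le> m + m1 - 1"
  shows "sqrt (real m * real m1) / real (m + m1) * sqrt (real (m + m1 - m') / real m')
           = real (m + m1 - m') / real (m + m1) * coll_c m m1 m'"
    and "sqrt (real m * real m1) / real (m + m1) * sqrt (real m' / real (m + m1 - m'))
           = real m' / real (m + m1) * coll_c m m1 m'"
    and "coll_c m m1 m' = sqrt (real m * real m1) / sqrt (real m' * real (m + m1 - m'))"
proof -
  define M where "M = real (m + m1)"
  define p where "p = real m'"
  define q where "q = real (m + m1 - m')"
  define s where "s = sqrt (real m * real m1)"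
  have p0: "p > 0" and q0: "q > 0" using k by (auto simp: p_def q_def)
  have Mpq: "M = p + q" using k by (simp add: M_def p_def q_def)
  have sp0: "sqrt p > 0" and sq0: "sqrt q > 0" using p0 q0 by simp_all
  have sp: "sqrt p * sqrt p = p" and sq: "sqrt q * sqrt q = q" using p0 q0 by simp_all
  have c: "coll_c m m1 m' = s / M * (sqrt q / sqrt p + sqrt p / sqrt q)"
    by (simp add: coll_c_def s_def M_def p_def q_def real_sqrt_divide)
  have M0: "M > 0" using Mpq p0 q0 by simp
  have "sqrt q / sqrt p + sqrt p / sqrt q = (sqrt q * sqrt q + sqrt p * sqrt p) / (sqrt p * sqrt q)"
    using sp0 sq0 by (simp add: add_frac_eq)
  also have "\<dots> = M / (sqrt p * sqrt q)" by (simp only: sp sq Mpq add.commute)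
  finally have c2: "coll_c m m1 m' = s / (sqrt p * sqrt q)"
    unfolding c using M0 by simp
  have hq: "q / (sqrt p * sqrt q) = sqrt q / sqrt p"
  proof -
    have "q / (sqrt p * sqrt q) = (sqrt q * sqrt q) / (sqrt p * sqrt q)" by (simp only: sq)
    also have "\<dots> = sqrt q / sqrt p" by (rule mult_divide_mult_cancel_right) (use sq0 in simp)
    finally show ?thesis .
  qed
  have hp: "p / (sqrt p * sqrt q) = sqrt p / sqrt q"
  proof -
    have "p / (sqrt p * sqrt q) = (sqrt p * sqrt p) / (sqrt p * sqrt q)" by (simp only: sp)
    also have "\<dots> = sqrt p / sqrt q" by (rule mult_divide_mult_cancel_left) (use sp0 in simp)
    finally show ?thesis .
  qed
  show "sqrt (real m * real m1) / real (m + m1) * sqrt (real (m + m1 - m') / real m')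
           = real (m + m1 - m') / real (m + m1) * coll_c m m1 m'"
  proof -
    have "q / M * (s / (sqrt p * sqrt q)) = s / M * (q / (sqrt p * sqrt q))" by simp
    then show ?thesis unfolding c2 s_def[symmetric] M_def[symmetric] p_def[symmetric] q_def[symmetric] hq
      by (simp add: real_sqrt_divide)
  qed
  show "sqrt (real m * real m1) / real (m + m1) * sqrt (real m' / real (m + m1 - m'))
           = real m' / real (m + m1) * coll_c m m1 m'"
  proof -
    have "p / M * (s / (sqrt p * sqrt q)) = s / M * (p / (sqrt p * sqrt q))" by simp
    then show ?thesis unfolding c2 s_def[symmetric] M_def[symmetric] p_def[symmetric] q_def[symmetric] hp
      by (simp add: real_sqrt_divide)
  qed
  show "coll_c m m1 m' = sqrt (real m * real m1) / sqrt (real m' * real (m + m1 - m'))"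
    unfolding c2 by (simp add: s_def p_def q_def real_sqrt_mult)
qed

lemma post_c_form:
  assumes k: "1 \<le> m" "1 \<le> m1" "1 \<le> m'" "m' \<le> m + m1 - 1"
  shows "post_v m m1 m' v v1 \<Omega> = (1 / real (m + m1)) *\<^sub>R (real m *\<^sub>R v + real m1 *\<^sub>R v1)
           + (real (m + m1 - m') / real (m + m1) * coll_c m m1 m') *\<^sub>R refl_map \<Omega> (v - v1)"
    and "post_v1 m m1 m' v v1 \<Omega> = (1 / real (m + m1)) *\<^sub>R (real m *\<^sub>R v + real m1 *\<^sub>R v1)
           - (real m' / real (m + m1) * coll_c m m1 m') *\<^sub>R refl_map \<Omega> (v - v1)"
  using coll_ab[OF k] by (simp_all only: post_v_eq post_v1_eq)

lemma rev_conds: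
  fixes m m1 m' :: nat
  assumes k: "1 \<le> m" "1 \<le> m1" "1 \<le> m'" "m' \<le> m + m1 - 1"
  shows "1 \<le> m'" "1 \<le> m + m1 - m'" "1 \<le> m" "m \<le> m' + (m + m1 - m') - 1"
    and "m' + (m + m1 - m') = m + m1" "m' + (m + m1 - m') - m = m1"
proof -
  show "1 \<le> m'" using k by arith
  show "1 \<le> m + m1 - m'" using k by arith
  show "1 \<le> m" using k by arith
  show "m \<le> m' + (m + m1 - m') - 1" using k by arith
  show "m' + (m + m1 - m') = m + m1" using k by arith
  show "m' + (m + m1 - m') - m = m1" using k by arith
qed

lemma coll_c_inv:
  assumes k: "1 \<le> m" "1 \<le> m1" "1 \<le> m'" "m' \<le> m + m1 - 1"
  shows "coll_c m' (m + m1 - m') m * coll_c m m1 m' = 1"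
proof -
  have a: "coll_c m m1 m' = sqrt (real m * real m1) / sqrt (real m' * real (m + m1 - m'))"
    using coll_ab(3)[OF k] .
  have b: "coll_c m' (m + m1 - m') m = sqrt (real m' * real (m + m1 - m')) / sqrt (real m * real m1)"
    using coll_ab(3)[OF rev_conds(1-4)[OF k]] rev_conds(6)[OF k] by simp
  have h0: "real m * real m1 > 0" using k by simp
  have h1: "real (m + m1 - m') > 0" using k by simp
  have h2: "real m' * real (m + m1 - m') > 0" using h1 k by (intro mult_pos_pos) simp_all
  have "sqrt (real m * real m1) > 0" "sqrt (real m' * real (m + m1 - m')) > 0"
    by (rule real_sqrt_gt_zero[OF h0], rule real_sqrt_gt_zero[OF h2])
  moreover have gen: "\<And>X Y::real. X > 0 \<Longrightarrow> Y > 0 \<Longrightarrow> Y / X * (X / Y) = 1" by simp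
  ultimately show ?thesis unfolding a b by blast
qed

lemma coll_reverse:
  fixes v v1 \<Omega> :: "'a::euclidean_space"
  assumes k: "1 \<le> m" "1 \<le> m1" "1 \<le> m'" "m' \<le> m + m1 - 1" and \<Omega>: "norm \<Omega> = 1"
  defines "w \<equiv> post_v m m1 m' v v1 \<Omega>" and "w1 \<equiv> post_v1 m m1 m' v v1 \<Omega>"
  shows "post_v m' (m + m1 - m') m w w1 (- \<Omega>) = v"
    and "post_v1 m' (m + m1 - m') m w w1 (- \<Omega>) = v1"
    and "w - w1 = coll_c m m1 m' *\<^sub>R refl_map \<Omega> (v - v1)"
proof -
  define M where "M = real (m + m1)"
  define p where "p = real m'"
  define q where "q = real (m + m1 - m')"
  define c where "c = coll_c m m1 m'"
  define c' where "c' = coll_c m' (m + m1 - m') m"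
  define r where "r = refl_map \<Omega> (v - v1)"
  define V where "V = (1 / M) *\<^sub>R (real m *\<^sub>R v + real m1 *\<^sub>R v1)"
  have p0: "p > 0" and q0: "q > 0" using k by (auto simp: p_def q_def)
  have Mpq: "M = p + q" using k by (simp add: M_def p_def q_def)
  have M0: "M > 0" using Mpq p0 q0 by simp
  have cc': "c' * c = 1" using coll_c_inv[OF k] by (simp add: c_def c'_def)
  have w: "w = V + (q / M * c) *\<^sub>R r" unfolding w_def post_c_form(1)[OF k]
    by (simp add: V_def M_def q_def c_def r_def)
  have w1: "w1 = V - (p / M * c) *\<^sub>R r" unfolding w1_def post_c_form(2)[OF k]
    by (simp add: V_def M_def p_def c_def r_def)
  have wd: "w - w1 = c *\<^sub>R r"
  proof -
    have "w - w1 = (q / M * c + p / M * c) *\<^sub>R r" by (simp add: w w1 scaleR_add_left)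
    also have "q / M * c + p / M * c = ((q + p) / M) * c" by (simp add: add_divide_distrib distrib_right)
    also have "(q + p) / M = 1" using M0 Mpq by simp
    finally show ?thesis by simp
  qed
  then show "w - w1 = coll_c m m1 m' *\<^sub>R refl_map \<Omega> (v - v1)" by (simp add: c_def r_def)
  have V': "(1 / real (m' + (m + m1 - m'))) *\<^sub>R (real m' *\<^sub>R w + real (m + m1 - m') *\<^sub>R w1) = V"
  proof -
    have "real m' *\<^sub>R w + real (m + m1 - m') *\<^sub>R w1 = (p + q) *\<^sub>R V + (p * (q / M * c) - q * (p / M * c)) *\<^sub>R r"
      by (simp add: w w1 p_def[symmetric] q_def[symmetric] algebra_simps)
    also have "p * (q / M * c) - q * (p / M * c) = 0" by simp
    finally show ?thesis using rev_conds(5)[OF k] M0 by (simp add: Mpq[symmetric] M_def)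
  qed
  have rr: "refl_map \<Omega> (w - w1) = c *\<^sub>R (v - v1)"
    unfolding wd r_def refl_map_props(4)[OF \<Omega>] refl_map_props(1)[OF \<Omega>] ..
  have "post_v m' (m + m1 - m') m w w1 (- \<Omega>) = V + (real m1 / M * c') *\<^sub>R refl_map \<Omega> (w - w1)"
    unfolding post_c_form(1)[OF rev_conds(1-4)[OF k]] V' refl_map_neg
    by (simp add: rev_conds(5,6)[OF k] M_def c'_def)
  also have "\<dots> = V + (real m1 / M) *\<^sub>R (v - v1)"
    unfolding rr using cc' by (simp add: mult.assoc)
  also have "\<dots> = v"
  proof -
    have "V + (real m1 / M) *\<^sub>R (v - v1) = ((real m + real m1) / M) *\<^sub>R v"
      by (simp add: V_def algebra_simps add_divide_distrib)
    also have "(real m + real m1) / M = 1" using M0 by (simp add: M_def)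
    finally show ?thesis by simp
  qed
  finally show "post_v m' (m + m1 - m') m w w1 (- \<Omega>) = v" .
  have "post_v1 m' (m + m1 - m') m w w1 (- \<Omega>) = V - (real m / M * c') *\<^sub>R refl_map \<Omega> (w - w1)"
    unfolding post_c_form(2)[OF rev_conds(1-4)[OF k]] V' refl_map_neg
    by (simp add: rev_conds(5,6)[OF k] M_def c'_def)
  also have "\<dots> = V - (real m / M) *\<^sub>R (v - v1)"
    unfolding rr using cc' by (simp add: mult.assoc)
  also have "\<dots> = v1"
  proof -
    have "V - (real m / M) *\<^sub>R (v - v1) = ((real m + real m1) / M) *\<^sub>R v1"
      by (simp add: V_def algebra_simps add_divide_distrib)
    also have "(real m + real m1) / M = 1" using M0 by (simp add: M_def)
    finally show ?thesis by simp
  qed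
  finally show "post_v1 m' (m + m1 - m') m w w1 (- \<Omega>) = v1" .
qed

lemma coll_c_sq:
  assumes k: "1 \<le> m" "1 \<le> m1" "1 \<le> m'" "m' \<le> m + m1 - 1"
  shows "(coll_c m m1 m')\<^sup>2 = real m * real m1 / (real m' * real (m + m1 - m'))"
proof -
  have h0: "real m * real m1 \<ge> 0" by simp
  have h2: "real m' * real (m + m1 - m') \<ge> 0" by simp
  show ?thesis unfolding coll_ab(3)[OF k] power_divide
    using h0 h2 by simp
qed

lemma coll_kernel_rev:
  fixes v v1 \<Omega> :: "'a::euclidean_space"
  assumes k: "1 \<le> m" "1 \<le> m1" "1 \<le> m'" "m' \<le> m + m1 - 1" and \<Omega>: "norm \<Omega> = 1"
  defines "w \<equiv> post_v m m1 m' v v1 \<Omega>" and "w1 \<equiv> post_v1 m m1 m' v v1 \<Omega>"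
  shows "coll_kernel BB m' (m + m1 - m') w w1 (- \<Omega>) = coll_kernel BB m m1 v v1 \<Omega>"
    and "((w - w1) \<bullet> (- \<Omega>) \<le> 0) = ((v - v1) \<bullet> \<Omega> \<le> 0)"
proof -
  define c where "c = coll_c m m1 m'"
  define u where "u = v - v1"
  define r where "r = refl_map \<Omega> u"
  have c0: "c > 0" using coll_c_pos[OF k] by (simp add: c_def)
  have wd: "w - w1 = c *\<^sub>R r"
    using coll_reverse(3)[OF k \<Omega>] by (simp add: w_def w1_def c_def r_def u_def)
  have nr: "norm r = norm u" using refl_map_props(3)[OF \<Omega>] by (simp add: r_def)
  have rO: "r \<bullet> \<Omega> = - (u \<bullet> \<Omega>)" using refl_map_props(2)[OF \<Omega>] by (simp add: r_def)
  have nw: "norm (w - w1) = c * norm u" using c0 nr by (simp add: wd)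
  have q0: "real (m + m1 - m') > 0" using k by simp
  have p0: "real m' > 0" using k by simp
  have en: "real m' * real (m + m1 - m') / real (m' + (m + m1 - m')) * (norm (w - w1))\<^sup>2
        = real m * real m1 / real (m + m1) * (norm u)\<^sup>2"
  proof -
    have "(norm (w - w1))\<^sup>2 = c\<^sup>2 * (norm u)\<^sup>2" by (simp add: nw power_mult_distrib)
    also have "c\<^sup>2 = real m * real m1 / (real m' * real (m + m1 - m'))"
      unfolding c_def by (rule coll_c_sq[OF k])
    finally have "(norm (w - w1))\<^sup>2 = real m * real m1 / (real m' * real (m + m1 - m')) * (norm u)\<^sup>2" .
    moreover have e: "real (m' + (m + m1 - m')) = real (m + m1)" using rev_conds(5)[OF k] by simp
    moreover have P0: "real m' * real (m + m1 - m') > 0" using q0 p0 by simp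
    moreover have gen: "\<And>P M a N :: real. P > 0 \<Longrightarrow> P / M * (a / P * N) = a / M * N"
      by (simp add: field_simps)
    ultimately show ?thesis by (simp only:)
  qed
  have cs: "(- \<Omega>) \<bullet> ((w - w1) /\<^sub>R norm (w - w1)) = \<Omega> \<bullet> (u /\<^sub>R norm u)"
  proof (cases "u = 0")
    case True
    then show ?thesis using nw by (simp add: wd)
  next
    case False
    then have nu: "norm u > 0" by simp
    have "(w - w1) /\<^sub>R norm (w - w1) = (1 / norm u) *\<^sub>R r"
      using c0 nu by (simp add: wd nw nr field_simps)
    then have "(- \<Omega>) \<bullet> ((w - w1) /\<^sub>R norm (w - w1)) = (1 / norm u) * (u \<bullet> \<Omega>)"
      using rO by (simp add: inner_commute)
    also have "\<dots> = \<Omega> \<bullet> (u /\<^sub>R norm u)" by (simp add: inner_commute divide_inverse)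
    finally show ?thesis .
  qed
  show "coll_kernel BB m' (m + m1 - m') w w1 (- \<Omega>) = coll_kernel BB m m1 v v1 \<Omega>"
    unfolding coll_kernel_def using en cs by (simp add: u_def)
  have "(w - w1) \<bullet> (- \<Omega>) = c * (u \<bullet> \<Omega>)" using rO by (simp add: wd)
  then show "((w - w1) \<bullet> (- \<Omega>) \<le> 0) = ((v - v1) \<bullet> \<Omega> \<le> 0)"
    using c0 by (simp add: u_def mult_le_0_iff)
qed

lemma AE_coll_norm: "AE x in (coll_space :: (('a::euclidean_space \<times> 'a) \<times> 'a) measure). norm (snd x) = 1"
proof -
  interpret sph: sigma_finite_measure "sphere_measure :: 'a measure" by (rule sigma_finite_sphere)
  let ?N = "{\<Omega>::'a. norm \<Omega> \<noteq> 1}"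
  have Nb: "?N \<in> sets sphere_measure" by simp
  have "emeasure (sphere_measure :: 'a measure) ?N = 0"
    using AE_iff_measurable[OF Nb, of "\<lambda>\<Omega>. norm \<Omega> = 1"] AE_sphere_norm[where 'a='a] by simp
  then have "?N \<in> null_sets sphere_measure" using Nb by (simp add: null_sets_def)
  then have "UNIV \<times> ?N \<in> null_sets ((lborel :: ('a \<times> 'a) measure) \<Otimes>\<^sub>M sphere_measure)"
    by (intro sph.times_in_null_sets2) simp
  then show ?thesis unfolding coll_space_eq
    by (rule AE_I') auto
qed

lemma coll_c_powr:
  assumes k: "1 \<le> m" "1 \<le> m1" "1 \<le> m'" "m' \<le> m + m1 - 1"
  shows "coll_c m m1 m' ^ n * (real m' powr (real n / 2) * real (m + m1 - m') powr (real n / 2))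
         = real m powr (real n / 2) * real m1 powr (real n / 2)"
proof -
  have sq: "sqrt x ^ n = x powr (real n / 2)" if "x > 0" for x :: real
  proof -
    have "sqrt x ^ n = (x powr (1/2)) ^ n" using that by (simp add: powr_half_sqrt)
    also have "\<dots> = (x powr (1/2)) powr (real n)" using that
      by (simp add: powr_realpow)
    also have "\<dots> = x powr (real n / 2)" by (simp add: powr_powr)
    finally show ?thesis .
  qed
  have P0: "real m' * real (m + m1 - m') > 0" using k by simp
  have Q0: "real m * real m1 > 0" using k by simp
  have "coll_c m m1 m' ^ n = (real m * real m1) powr (real n / 2) / (real m' * real (m + m1 - m')) powr (real n / 2)"
    unfolding coll_ab(3)[OF k] power_divide sq[OF P0] sq[OF Q0] ..
  moreover have "(real m' * real (m + m1 - m')) powr (real n / 2) > 0"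
    unfolding powr_gt_zero using P0 by linarith
  moreover have gen: "\<And>x A B::real. x = A / B \<Longrightarrow> B > 0 \<Longrightarrow> x * B = A" by simp
  ultimately show ?thesis unfolding powr_mult by blast
qed

lemma key_ineq:
  fixes X ga gb gc gd fa fb fc fd ma mb mc md C h :: real
  assumes X: "X \<ge> 0" and pos: "ga > 0" "gb > 0" "gc > 0" "gd > 0" "fa > 0" "fb > 0" "fc > 0" "fd > 0"
    and mpos: "ma > 0" "mb > 0" "mc > 0" "md > 0"
    and C: "C * (mc powr h * md powr h) = ma powr h * mb powr h"
  defines "\<phi>a \<equiv> ln (ga * fa / ma powr h)" and "\<phi>b \<equiv> ln (gb * fb / mb powr h)"
    and "\<phi>c \<equiv> ln (gc * fc / mc powr h)" and "\<phi>d \<equiv> ln (gd * fd / md powr h)"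
  shows "ga * gb * (X * fa * fb * (\<phi>c + \<phi>d - \<phi>a - \<phi>b))
       + gc * gd * C * (X * fc * fd * (\<phi>a + \<phi>b - \<phi>c - \<phi>d)) \<le> 0"
proof -
  define Ga where "Ga = ga * fa / ma powr h"
  define Gb where "Gb = gb * fb / mb powr h"
  define Gc where "Gc = gc * fc / mc powr h"
  define Gd where "Gd = gd * fd / md powr h"
  have G0: "Ga > 0" "Gb > 0" "Gc > 0" "Gd > 0"
    using pos mpos by (simp_all add: Ga_def Gb_def Gc_def Gd_def)
  define P where "P = Ga * Gb"
  define P' where "P' = Gc * Gd"
  have P0: "P > 0" "P' > 0" using G0 by (simp_all add: P_def P'_def)
  define Y where "Y = X * (ma powr h * mb powr h)"
  have Y0: "Y \<ge> 0" using X by (simp add: Y_def)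
  have e1: "ga * gb * (X * fa * fb) = Y * P"
    using mpos by (simp add: Y_def P_def Ga_def Gb_def field_simps)
  have e2: "gc * gd * C * (X * fc * fd) = Y * P'"
  proof -
    have "gc * gd * C * (X * fc * fd) = X * (C * (mc powr h * md powr h)) * P'"
      using mpos by (simp add: P'_def Gc_def Gd_def field_simps)
    then show ?thesis by (simp add: C Y_def mult.assoc mult.left_commute)
  qed
  have l1: "\<phi>c + \<phi>d - \<phi>a - \<phi>b = ln P' - ln P"
    using G0 by (simp add: \<phi>a_def \<phi>b_def \<phi>c_def \<phi>d_def Ga_def[symmetric] Gb_def[symmetric]
                   Gc_def[symmetric] Gd_def[symmetric] P_def P'_def ln_mult)
  have l2: "\<phi>a + \<phi>b - \<phi>c - \<phi>d = ln P - ln P'"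
    using l1 by simp
  have core: "(P - P') * (ln P' - ln P) \<le> 0"
  proof (cases "P \<le> P'")
    case True
    then have "ln P \<le> ln P'" using P0 by simp
    then show ?thesis using True by (intro mult_nonpos_nonneg) simp_all
  next
    case False
    then have "ln P' \<le> ln P" using P0 by simp
    then show ?thesis using False by (intro mult_nonneg_nonpos) simp_all
  qed
  have "ga * gb * (X * fa * fb * (\<phi>c + \<phi>d - \<phi>a - \<phi>b))
       + gc * gd * C * (X * fc * fd * (\<phi>a + \<phi>b - \<phi>c - \<phi>d))
      = Y * ((P - P') * (ln P' - ln P))"
  proof -
    have "ga * gb * (X * fa * fb * (\<phi>c + \<phi>d - \<phi>a - \<phi>b)) = Y * P * (ln P' - ln P)"
      unfolding l1 e1[symmetric] by (simp add: mult.assoc)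
    moreover have "gc * gd * C * (X * fc * fd * (\<phi>a + \<phi>b - \<phi>c - \<phi>d)) = Y * P' * (ln P - ln P')"
      unfolding l2 e2[symmetric] by (simp add: mult.assoc)
    ultimately show ?thesis by (simp add: algebra_simps)
  qed
  also have "\<dots> \<le> 0" using Y0 core by (rule mult_nonneg_nonpos)
  finally show ?thesis .
qed

lemma kernel_nonneg:
  fixes v v1 \<Omega> :: "'a::euclidean_space"
  assumes BB_nonneg: "\<And>e c. 0 \<le> e \<Longrightarrow> -1 \<le> c \<Longrightarrow> c \<le> 1 \<Longrightarrow> BB e c \<ge> 0"
    and \<Omega>: "norm \<Omega> = 1"
  shows "coll_kernel BB m m1 v v1 \<Omega> \<ge> 0"
proof -
  have n1: "norm ((v - v1) /\<^sub>R norm (v - v1)) \<le> 1"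
    by (cases "v = v1") simp_all
  have "\<bar>\<Omega> \<bullet> ((v - v1) /\<^sub>R norm (v - v1))\<bar> \<le> norm \<Omega> * norm ((v - v1) /\<^sub>R norm (v - v1))"
    by (rule Cauchy_Schwarz_ineq2)
  also have "\<dots> \<le> 1" using n1 \<Omega> by simp
  finally have "\<bar>\<Omega> \<bullet> ((v - v1) /\<^sub>R norm (v - v1))\<bar> \<le> 1" .
  then show ?thesis unfolding coll_kernel_def
    by (intro BB_nonneg) auto
qed

lemma coll_integrand_split:
  "coll_integrand BB f \<phi> k = (\<lambda>x. coll_term 0 BB f \<phi> k x + coll_term 1 BB f \<phi> k x - coll_term 2 BB f \<phi> k x - coll_term 3 BB f \<phi> k x)"
  by (rule ext) (simp add: coll_integrand_def)

lemma pair_nonpos: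
  fixes A :: "nat \<Rightarrow> nat \<Rightarrow> nat \<Rightarrow> real"
    and BB :: "real \<Rightarrow> real \<Rightarrow> real"
    and \<gamma> :: "nat \<Rightarrow> real"
    and f :: "nat \<Rightarrow> 'a::euclidean_space \<Rightarrow> real"
  assumes A_eq: "\<And>m m1 m'. 1 \<le> m \<Longrightarrow> 1 \<le> m1 \<Longrightarrow> 1 \<le> m' \<Longrightarrow> m' \<le> m + m1 - 1
                   \<Longrightarrow> A m m1 m' = \<gamma> m * \<gamma> m1"
    and \<gamma>_pos: "\<And>m. 1 \<le> m \<Longrightarrow> \<gamma> m > 0"
    and BB_nonneg: "\<And>e c. 0 \<le> e \<Longrightarrow> -1 \<le> c \<Longrightarrow> c \<le> 1 \<Longrightarrow> BB e c \<ge> 0"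
    and f_pos: "\<And>m v. 1 \<le> m \<Longrightarrow> f m v > 0"
    and terms_integrable: "\<And>i k. i < 4 \<Longrightarrow> k \<in> coll_indices \<Longrightarrow>
           integrable coll_space (coll_term i BB f (entropy_test \<gamma> f) k)"
    and k: "1 \<le> m" "1 \<le> m1" "1 \<le> m'" "m' \<le> m + m1 - 1"
  shows "A m m1 m' * integral\<^sup>L coll_space (coll_integrand BB f (entropy_test \<gamma> f) (m, m1, m'))
       + A m' (m + m1 - m') m * integral\<^sup>L coll_space (coll_integrand BB f (entropy_test \<gamma> f) (m', m + m1 - m', m)) \<le> 0"
proof -
  define \<phi> where "\<phi> = entropy_test \<gamma> f"
  define q where "q = m + m1 - m'"
  define E where "E = coll_integrand BB f \<phi> (m, m1, m')"
  define E' where "E' = coll_integrand BB f \<phi> (m', q, m)"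
  define c where "c = coll_c m m1 m'"
  define n where "n = DIM('a)"
  note kk = rev_conds[OF k, folded q_def]
  have kI: "(m, m1, m') \<in> coll_indices" using k by (simp add: coll_indices_def)
  have kI': "(m', q, m) \<in> coll_indices" using kk by (simp add: coll_indices_def)
  have Eint: "integrable coll_space E"
    unfolding E_def coll_integrand_split \<phi>_def
    by (intro Bochner_Integration.integrable_diff Bochner_Integration.integrable_add terms_integrable[OF _ kI]) simp_all
  have E'int: "integrable coll_space E'"
    unfolding E'_def coll_integrand_split \<phi>_def
    by (intro Bochner_Integration.integrable_diff Bochner_Integration.integrable_add terms_integrable[OF _ kI']) simp_all
  have c0: "c > 0" using coll_c_pos[OF k] by (simp add: c_def)
  have cn0: "c ^ n > 0" using c0 by simp
  have TE'int: "integrable coll_space (\<lambda>x. E' (coll_T m m1 m' x))"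
    by (rule coll_int_cov(1)[OF k E'int])
  have TE'eq: "(\<integral>x. E' (coll_T m m1 m' x) \<partial>coll_space) = (1 / c ^ n) * (\<integral>x. E' x \<partial>coll_space)"
    using coll_int_cov(2)[OF k E'int] by (simp add: c_def n_def)
  have E'eq: "(\<integral>x. E' x \<partial>coll_space) = c ^ n * (\<integral>x. E' (coll_T m m1 m' x) \<partial>coll_space)"
  proof -
    have gen: "\<And>a b C::real. C > 0 \<Longrightarrow> a = (1 / C) * b \<Longrightarrow> b = C * a" by simp
    show ?thesis by (rule gen[OF cn0 TE'eq])
  qed
  have Ak: "A m m1 m' = \<gamma> m * \<gamma> m1" using A_eq[OF k] .
  have Ak': "A m' q m = \<gamma> m' * \<gamma> q" using A_eq[OF kk(1-4)] .
  define F where "F x = \<gamma> m * \<gamma> m1 * E x + \<gamma> m' * \<gamma> q * c ^ n * E' (coll_T m m1 m' x)" for x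
  have lhs: "A m m1 m' * (\<integral>x. E x \<partial>coll_space) + A m' q m * (\<integral>x. E' x \<partial>coll_space) = (\<integral>x. F x \<partial>coll_space)"
    unfolding F_def Ak Ak' E'eq
    using Eint TE'int by (simp add: mult.assoc)
  have AEF: "AE x in coll_space. F x \<le> 0"
    using AE_coll_norm
  proof (rule eventually_mono)
    fix x :: "('a \<times> 'a) \<times> 'a" assume nx: "norm (snd x) = 1"
    obtain v v1 \<Omega> where x: "x = ((v, v1), \<Omega>)" by (metis prod.collapse)
    have \<Omega>: "norm \<Omega> = 1" using nx x by simp
    define w where "w = post_v m m1 m' v v1 \<Omega>"
    define w1 where "w1 = post_v1 m m1 m' v v1 \<Omega>"
    define ind where "ind = (if (v - v1) \<bullet> \<Omega> \<le> 0 then 1 else (0::real))"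
    define K where "K = coll_kernel BB m m1 v v1 \<Omega>"
    define X where "X = ind * K"
    have X0: "X \<ge> 0" unfolding X_def ind_def K_def
      using kernel_nonneg[OF BB_nonneg \<Omega>] by simp
    have Ex: "E x = X * f m v * f m1 v1 * (\<phi> m' w + \<phi> q w1 - \<phi> m v - \<phi> m1 v1)"
      by (simp add: E_def x coll_integrand_def coll_term_def coll_weight_def X_def ind_def K_def w_def w1_def q_def algebra_simps)
    have Tx: "coll_T m m1 m' x = ((w, w1), - \<Omega>)" by (simp add: coll_T_def x w_def w1_def)
    have r1: "post_v m' q m w w1 (- \<Omega>) = v" and r2: "post_v1 m' q m w w1 (- \<Omega>) = v1"
      using coll_reverse(1,2)[OF k \<Omega>] by (simp_all add: w_def w1_def q_def)
    have rk: "coll_kernel BB m' q w w1 (- \<Omega>) = K"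
      using coll_kernel_rev(1)[OF k \<Omega>] by (simp add: w_def w1_def q_def K_def)
    have ri: "((w - w1) \<bullet> (- \<Omega>) \<le> 0) = ((v - v1) \<bullet> \<Omega> \<le> 0)"
      using coll_kernel_rev(2)[OF k \<Omega>] by (simp add: w_def w1_def)
    have E'x: "E' (coll_T m m1 m' x) = X * f m' w * f q w1 * (\<phi> m v + \<phi> m1 v1 - \<phi> m' w - \<phi> q w1)"
    proof -
      have "E' (coll_T m m1 m' x) = (if (w - w1) \<bullet> (- \<Omega>) \<le> 0 then 1 else 0) * coll_kernel BB m' q w w1 (- \<Omega>) * f m' w * f q w1 *
              (\<phi> m (post_v m' q m w w1 (- \<Omega>)) + \<phi> (m' + q - m) (post_v1 m' q m w w1 (- \<Omega>)) - \<phi> m' w - \<phi> q w1)"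
        by (simp add: E'_def Tx coll_integrand_def coll_term_def coll_weight_def algebra_simps)
      also have "\<dots> = X * f m' w * f q w1 * (\<phi> m v + \<phi> m1 v1 - \<phi> m' w - \<phi> q w1)"
        unfolding r1 r2 rk ri kk(6) X_def ind_def by simp
      finally show ?thesis .
    qed
    have C: "c ^ n * (real m' powr (real n / 2) * real q powr (real n / 2)) = real m powr (real n / 2) * real m1 powr (real n / 2)"
      using coll_c_powr[OF k, of n] by (simp add: c_def q_def)
    have "\<gamma> m * \<gamma> m1 * (X * f m v * f m1 v1 * (\<phi> m' w + \<phi> q w1 - \<phi> m v - \<phi> m1 v1))
       + \<gamma> m' * \<gamma> q * c ^ n * (X * f m' w * f q w1 * (\<phi> m v + \<phi> m1 v1 - \<phi> m' w - \<phi> q w1)) \<le> 0"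
      unfolding \<phi>_def entropy_test_def n_def[symmetric]
      by (rule key_ineq[OF X0 \<gamma>_pos[OF k(1)] \<gamma>_pos[OF k(2)] \<gamma>_pos[OF kk(1)] \<gamma>_pos[OF kk(2)]
            f_pos[OF k(1)] f_pos[OF k(2)] f_pos[OF kk(1)] f_pos[OF kk(2)] _ _ _ _ C])
         (use k kk in simp_all)
    then show "F x \<le> 0" unfolding F_def Ex E'x .
  qed
  have "(\<integral>x. F x \<partial>coll_space) \<le> 0"
  proof -
    have "0 \<le> (\<integral>x. - F x \<partial>coll_space)"
      by (rule integral_nonneg_AE) (use AEF in \<open>auto elim: eventually_mono\<close>)
    then show ?thesis by simp
  qed
  then show ?thesis using lhs by (simp add: E_def E'_def \<phi>_def q_def)
qed

theorem proposition2p6: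
  fixes A :: "nat \<Rightarrow> nat \<Rightarrow> nat \<Rightarrow> real"
    and BB :: "real \<Rightarrow> real \<Rightarrow> real"
    and \<gamma> :: "nat \<Rightarrow> real"
    and f :: "nat \<Rightarrow> 'a::euclidean_space \<Rightarrow> real"
  assumes A_eq: "\<And>m m1 m'. 1 \<le> m \<Longrightarrow> 1 \<le> m1 \<Longrightarrow> 1 \<le> m' \<Longrightarrow> m' \<le> m + m1 - 1
                   \<Longrightarrow> A m m1 m' = \<gamma> m * \<gamma> m1"
    and \<gamma>_pos: "\<And>m. 1 \<le> m \<Longrightarrow> \<gamma> m > 0"
    and BB_nonneg: "\<And>e c. 0 \<le> e \<Longrightarrow> -1 \<le> c \<Longrightarrow> c \<le> 1 \<Longrightarrow> BB e c \<ge> 0"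
    and BB_meas: "case_prod BB \<in> borel_measurable borel"
    and f_pos: "\<And>m v. 1 \<le> m \<Longrightarrow> f m v > 0"
    and f_meas: "\<And>m. 1 \<le> m \<Longrightarrow> f m \<in> borel_measurable borel"
    and terms_integrable: "\<And>i k. i < 4 \<Longrightarrow> k \<in> coll_indices \<Longrightarrow>
           integrable coll_space (coll_term i BB f (entropy_test \<gamma> f) k)"
    and terms_summable: "\<And>i. i < 4 \<Longrightarrow>
           (\<lambda>k. (case k of (m, m1, m') \<Rightarrow> A m m1 m') *
                 (\<integral>x. \<bar>coll_term i BB f (entropy_test \<gamma> f) k x\<bar> \<partial>coll_space))
             summable_on coll_indices"
  shows "BME_pairing A BB f (entropy_test \<gamma> f) \<le> 0"
proof -
  define I where "I = coll_indices"
  define Ak where "Ak k = (case k of (m, m1, m') \<Rightarrow> A m m1 m')" for k :: "nat \<times> nat \<times> nat"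
  define a where "a k = Ak k * integral\<^sup>L coll_space (coll_integrand BB f (entropy_test \<gamma> f) k)" for k
  define \<sigma> where "\<sigma> k = (case k of (m, m1, m') \<Rightarrow> (m', m + m1 - m', m))" for k :: "nat \<times> nat \<times> nat"
  define b where "b i k = Ak k * (\<integral>x. \<bar>coll_term i BB f (entropy_test \<gamma> f) k x\<bar> \<partial>coll_space)" for i k
  define B where "B k = b 0 k + b 1 k + b 2 k + b 3 k" for k
  have aeq: "a = (\<lambda>k. (case k of (m, m1, m') \<Rightarrow> A m m1 m') * integral\<^sup>L coll_space (coll_integrand BB f (entropy_test \<gamma> f) k))"
    by (simp add: fun_eq_iff a_def Ak_def)
  have pairing: "BME_pairing A BB f (entropy_test \<gamma> f) = 1 / 2 * infsum a I"
    unfolding aeq by (simp add: BME_pairing_def I_def)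
  have Ak0: "Ak k \<ge> 0" if "k \<in> I" for k
  proof -
    obtain m m1 m' where k: "k = (m, m1, m')" by (metis prod.collapse)
    have c: "1 \<le> m" "1 \<le> m1" "1 \<le> m'" "m' \<le> m + m1 - 1"
      using \<open>k \<in> I\<close> by (auto simp: I_def coll_indices_def k)
    have "Ak k = \<gamma> m * \<gamma> m1" using A_eq[OF c] by (simp add: Ak_def k)
    also have "\<dots> \<ge> 0" using \<gamma>_pos[OF c(1)] \<gamma>_pos[OF c(2)] by simp
    finally show ?thesis .
  qed
  have bs: "b i summable_on I" if "i < 4" for i
  proof -
    have "b i = (\<lambda>k. (case k of (m, m1, m') \<Rightarrow> A m m1 m') *
                 (\<integral>x. \<bar>coll_term i BB f (entropy_test \<gamma> f) k x\<bar> \<partial>coll_space))"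
      by (simp add: fun_eq_iff b_def Ak_def)
    then show ?thesis using terms_summable[OF that] by (simp add: I_def)
  qed
  have Bs: "B summable_on I"
    unfolding B_def by (intro summable_on_add bs) simp_all
  have b0: "b i k \<ge> 0" if "k \<in> I" for i k
    unfolding b_def using Ak0[OF that] by (intro mult_nonneg_nonneg integral_nonneg) auto
  have B0: "B k \<ge> 0" if "k \<in> I" for k
    unfolding B_def using b0[OF that] by (simp add: add_nonneg_nonneg)
  have abound: "norm (a k) \<le> norm (B k)" if kI: "k \<in> I" for k
  proof -
    let ?t = "\<lambda>i x. coll_term i BB f (entropy_test \<gamma> f) k x"
    have ti: "integrable coll_space (?t i)" if "i < 4" for i
      using terms_integrable[OF that] kI by (simp add: I_def)
    have ie: "integral\<^sup>L coll_space (coll_integrand BB f (entropy_test \<gamma> f) k)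
        = integral\<^sup>L coll_space (?t 0) + integral\<^sup>L coll_space (?t 1) - integral\<^sup>L coll_space (?t 2) - integral\<^sup>L coll_space (?t 3)"
      unfolding coll_integrand_split
      using ti[of 0] ti[of 1] ti[of 2] ti[of 3] by simp
    have "\<bar>integral\<^sup>L coll_space (coll_integrand BB f (entropy_test \<gamma> f) k)\<bar>
        \<le> \<bar>integral\<^sup>L coll_space (?t 0)\<bar> + \<bar>integral\<^sup>L coll_space (?t 1)\<bar> + \<bar>integral\<^sup>L coll_space (?t 2)\<bar> + \<bar>integral\<^sup>L coll_space (?t 3)\<bar>"
      unfolding ie by linarith
    also have "\<dots> \<le> (\<integral>x. \<bar>?t 0 x\<bar> \<partial>coll_space) + (\<integral>x. \<bar>?t 1 x\<bar> \<partial>coll_space) + (\<integral>x. \<bar>?t 2 x\<bar> \<partial>coll_space) + (\<integral>x. \<bar>?t 3 x\<bar> \<partial>coll_space)"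
      by (intro add_mono integral_abs_bound)
    finally have "Ak k * \<bar>integral\<^sup>L coll_space (coll_integrand BB f (entropy_test \<gamma> f) k)\<bar> \<le> B k"
      using Ak0[OF kI] unfolding B_def b_def by (simp add: distrib_left[symmetric] mult_left_mono)
    then show ?thesis using Ak0[OF kI] B0[OF kI] by (simp add: a_def abs_mult)
  qed
  have Babs: "(\<lambda>k. norm (B k)) summable_on I"
    using Bs by (rule summable_on_cong[THEN iffD1, rotated]) (simp add: B0)
  have as: "a summable_on I"
    by (rule Infinite_Sum.abs_summable_summable, rule Infinite_Sum.abs_summable_on_comparison_test[OF Babs abound])
  have bij: "bij_betw \<sigma> I I"
  proof (rule bij_betw_byWitness[where f' = \<sigma>])
    show "\<forall>k\<in>I. \<sigma> (\<sigma> k) = k"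
    proof
      fix k assume "k \<in> I"
      then obtain m m1 m' where k: "k = (m, m1, m')" and c: "1 \<le> m" "1 \<le> m1" "1 \<le> m'" "m' \<le> m + m1 - 1"
        by (auto simp: I_def coll_indices_def)
      show "\<sigma> (\<sigma> k) = k" using rev_conds(6)[OF c] by (simp add: \<sigma>_def k)
    qed
    then show "\<forall>k\<in>I. \<sigma> (\<sigma> k) = k" .
    show "\<sigma> ` I \<subseteq> I"
    proof
      fix k' assume "k' \<in> \<sigma> ` I"
      then obtain k where kk: "k' = \<sigma> k" "k \<in> I" by blast
      then obtain m m1 m' where k: "k = (m, m1, m')" and c: "1 \<le> m" "1 \<le> m1" "1 \<le> m'" "m' \<le> m + m1 - 1"
        by (auto simp: I_def coll_indices_def)
      show "k' \<in> I" using rev_conds(1-4)[OF c] by (simp add: kk(1) \<sigma>_def k I_def coll_indices_def)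
    qed
    then show "\<sigma> ` I \<subseteq> I" .
  qed
  have as2: "(\<lambda>k. a (\<sigma> k)) summable_on I"
    using summable_on_reindex_bij_betw[OF bij, of a] as by blast
  have eq: "infsum (\<lambda>k. a (\<sigma> k)) I = infsum a I"
    by (rule infsum_reindex_bij_betw[OF bij])
  have sum2: "infsum (\<lambda>k. a k + a (\<sigma> k)) I = 2 * infsum a I"
    using infsum_add[OF as as2] eq by simp
  have pn: "a k + a (\<sigma> k) \<le> 0" if kI: "k \<in> I" for k
  proof -
    obtain m m1 m' where k: "k = (m, m1, m')" and c: "1 \<le> m" "1 \<le> m1" "1 \<le> m'" "m' \<le> m + m1 - 1"
      using kI by (auto simp: I_def coll_indices_def)
    show ?thesis
      using pair_nonpos[OF A_eq \<gamma>_pos BB_nonneg f_pos terms_integrable c]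
      by (simp add: a_def Ak_def \<sigma>_def k)
  qed
  have "infsum (\<lambda>k. a k + a (\<sigma> k)) I \<le> infsum (\<lambda>_. 0::real) I"
    by (rule infsum_mono[OF summable_on_add[OF as as2]]) (simp_all add: pn)
  then have "2 * infsum a I \<le> 0" using sum2 by simp
  then show ?thesis using pairing by simp
qed

end
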